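(* Let $G$ be a finite group with $|G|\ge 4$, $\sigma$ an automorphism of $G$ of order two, and $S$ a symmetric subset of $G$ closed under conjugation. Let $\rho_1,\dots,\rho_r$ be the irreducible complex representations of $G$ with characters $\chi_1,\dots,\chi_r$, and let $\lambda_i=\frac{1}{\dim\rho_i}\sum_{s\in S}\chi_i(s)$. (1) Up to factors of $\pm1$, the eigenvalues of the adjacency operator of the Cayley sum graph $C_\Sigma(G,S)$ are the numbers $\lambda_i$, each occurring with multiplicity $(\dim\rho_i)^2$, $1\le i\le r$. (2) If $\sigma(S)=S$, then up to factors of $\pm1$, the eigenvalues of the adjacency operator of the twisted Cayley graph $C(G,S)^\sigma$ are the numbers $\lambda_i$, each occurring with multiplicity $(\dim\rho_i)^2$. (3) If $\sigma(S)=S$, then up to factors of $\pm1$, the eigenvalues of the adjacency operator of the twisted Cayley sum graph $C_\Sigma(G,S)^\sigma$ are the numbers $\lambda_i$, each occurring with multiplicity $(\dim\rho_i)^2$. Moreover, the number of factors equal to $1$ in (1) (resp. (2), (3)) equals the average of $|G|$ and the number of solutions $g\in G$ of $g=g^{-1}$ (resp. $g=\sigma(g)$, $g=\sigma(g)^{-1}$).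
   Context: For a finite group $G$, an automorphism $\sigma$ and a subset $S$: $C(G,S)$ has vertex set $G$ and an edge from $x$ to $xs$ for each $s\in S$; $C_\Sigma(G,S)$ has an edge from $x$ to $x^{-1}s$; $C(G,S)^\sigma$ has an edge from $x$ to $\sigma(xs)$; $C_\Sigma(G,S)^\sigma$ has an edge from $x$ to $\sigma(x^{-1}s)$. "Up to factors of $\pm1$" means there is a bijection between the two multisets of eigenvalues under which each eigenvalue is sent to itself or its negative; the "factors of $1$" are those matched with themselves. *)

theory Defs
  imports "HOL-Algebra.Group" "Jordan_Normal_Form.Char_Poly"
begin

definition is_rep :: "('a, 'b) monoid_scheme \<Rightarrow> nat \<Rightarrow> ('a \<Rightarrow> complex mat) \<Rightarrow> bool" where
  "is_rep G n \<rho> \<longleftrightarrow>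
     (\<forall>g\<in>carrier G. \<rho> g \<in> carrier_mat n n) \<and>
     (\<forall>g\<in>carrier G. \<forall>h\<in>carrier G. \<rho> (g \<otimes>\<^bsub>G\<^esub> h) = \<rho> g * \<rho> h) \<and>
     \<rho> \<one>\<^bsub>G\<^esub> = 1\<^sub>m n"

definition invariant_subspace ::
  "('a, 'b) monoid_scheme \<Rightarrow> nat \<Rightarrow> ('a \<Rightarrow> complex mat) \<Rightarrow> complex vec set \<Rightarrow> bool" where
  "invariant_subspace G n \<rho> W \<longleftrightarrow>
     W \<subseteq> carrier_vec n \<and> 0\<^sub>v n \<in> W \<and>
     (\<forall>v\<in>W. \<forall>w\<in>W. v + w \<in> W) \<and>
     (\<forall>c. \<forall>v\<in>W. c \<cdot>\<^sub>v v \<in> W) \<and>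
     (\<forall>g\<in>carrier G. \<forall>v\<in>W. \<rho> g *\<^sub>v v \<in> W)"

definition irreducible_rep :: "('a, 'b) monoid_scheme \<Rightarrow> nat \<Rightarrow> ('a \<Rightarrow> complex mat) \<Rightarrow> bool" where
  "irreducible_rep G n \<rho> \<longleftrightarrow> is_rep G n \<rho> \<and> 0 < n \<and>
     (\<forall>W. invariant_subspace G n \<rho> W \<longrightarrow> W = {0\<^sub>v n} \<or> W = carrier_vec n)"

definition equiv_rep ::
  "('a, 'b) monoid_scheme \<Rightarrow> nat \<Rightarrow> ('a \<Rightarrow> complex mat) \<Rightarrow> nat \<Rightarrow> ('a \<Rightarrow> complex mat) \<Rightarrow> bool" where
  "equiv_rep G n \<rho> m \<tau> \<longleftrightarrow> n = m \<and>
     (\<exists>P\<in>carrier_mat n n. invertible_mat P \<and> (\<forall>g\<in>carrier G. P * \<rho> g = \<tau> g * P))"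

definition complete_irreps ::
  "('a, 'b) monoid_scheme \<Rightarrow> (nat \<times> ('a \<Rightarrow> complex mat)) list \<Rightarrow> bool" where
  "complete_irreps G reps \<longleftrightarrow>
     (\<forall>i<length reps. irreducible_rep G (fst (reps ! i)) (snd (reps ! i))) \<and>
     (\<forall>i<length reps. \<forall>j<length reps. i \<noteq> j \<longrightarrow>
        \<not> equiv_rep G (fst (reps ! i)) (snd (reps ! i)) (fst (reps ! j)) (snd (reps ! j))) \<and>
     (\<forall>n \<rho>. irreducible_rep G n \<rho> \<longrightarrow>
        (\<exists>i<length reps. equiv_rep G n \<rho> (fst (reps ! i)) (snd (reps ! i))))"

definition mat_trace :: "complex mat \<Rightarrow> complex" where
  "mat_trace A = (\<Sum>i<dim_row A. A $$ (i, i))"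

definition character :: "('a \<Rightarrow> complex mat) \<Rightarrow> 'a \<Rightarrow> complex" where
  "character \<rho> g = mat_trace (\<rho> g)"

definition rep_lambda :: "'a set \<Rightarrow> nat \<Rightarrow> ('a \<Rightarrow> complex mat) \<Rightarrow> complex" where
  "rep_lambda S n \<rho> = (\<Sum>s\<in>S. character \<rho> s) / of_nat n"

text \<open>A fixed enumeration of the vertex set (the spectrum does not depend on it).\<close>
definition enum_carrier :: "('a, 'b) monoid_scheme \<Rightarrow> 'a list" where
  "enum_carrier G = (SOME xs. distinct xs \<and> set xs = carrier G)"

text \<open>Adjacency matrix of the digraph on vertex set carrier G with one edge from x to
  e x s for every s in S: entry (x,y) is the number of edges from x to y.\<close>
definition adj_matrix :: "('a, 'b) monoid_scheme \<Rightarrow> 'a set \<Rightarrow> ('a \<Rightarrow> 'a \<Rightarrow> 'a) \<Rightarrow> complex mat" where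
  "adj_matrix G S e = (let vs = enum_carrier G in
     mat (length vs) (length vs) (\<lambda>(i, j). of_nat (card {s\<in>S. e (vs ! i) s = vs ! j})))"

definition cayley_edge :: "('a, 'b) monoid_scheme \<Rightarrow> 'a \<Rightarrow> 'a \<Rightarrow> 'a" where
  "cayley_edge G x s = x \<otimes>\<^bsub>G\<^esub> s"
definition cayley_sum_edge :: "('a, 'b) monoid_scheme \<Rightarrow> 'a \<Rightarrow> 'a \<Rightarrow> 'a" where
  "cayley_sum_edge G x s = inv\<^bsub>G\<^esub> x \<otimes>\<^bsub>G\<^esub> s"
definition twisted_cayley_edge :: "('a, 'b) monoid_scheme \<Rightarrow> ('a \<Rightarrow> 'a) \<Rightarrow> 'a \<Rightarrow> 'a \<Rightarrow> 'a" where
  "twisted_cayley_edge G \<sigma> x s = \<sigma> (x \<otimes>\<^bsub>G\<^esub> s)"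
definition twisted_cayley_sum_edge :: "('a, 'b) monoid_scheme \<Rightarrow> ('a \<Rightarrow> 'a) \<Rightarrow> 'a \<Rightarrow> 'a \<Rightarrow> 'a" where
  "twisted_cayley_sum_edge G \<sigma> x s = \<sigma> (inv\<^bsub>G\<^esub> x \<otimes>\<^bsub>G\<^esub> s)"

definition eigenvalue_mset :: "complex mat \<Rightarrow> complex multiset" where
  "eigenvalue_mset A = (THE M. char_poly A = (\<Prod>a\<in>#M. [:- a, 1:]))"

text \<open>E equals, up to factors \<plusminus>1, the multiset of the \<lambda>_i each with multiplicity
  (dim \<rho>_i)^2 (indexed by triples (i,a,b), a,b < dim \<rho>_i), and the number of factors
  equal to 1 is c (i.e. 2*c = |G| + N).\<close>
definition rep_index :: "(nat \<times> ('a \<Rightarrow> complex mat)) list \<Rightarrow> (nat \<times> nat \<times> nat) set" where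
  "rep_index reps = {(i, a, b). i < length reps \<and> a < fst (reps ! i) \<and> b < fst (reps ! i)}"

definition spectrum_up_to_signs ::
  "'a set \<Rightarrow> (nat \<times> ('a \<Rightarrow> complex mat)) list \<Rightarrow> complex multiset \<Rightarrow> nat \<Rightarrow> bool" where
  "spectrum_up_to_signs S reps E c \<longleftrightarrow>
     (\<exists>\<epsilon> :: nat \<times> nat \<times> nat \<Rightarrow> complex.
        (\<forall>k\<in>rep_index reps. \<epsilon> k = 1 \<or> \<epsilon> k = -1) \<and>
        E = image_mset (\<lambda>(i, a, b). \<epsilon> (i, a, b) * rep_lambda S (fst (reps ! i)) (snd (reps ! i)))
              (mset_set (rep_index reps)) \<and>
        card {k\<in>rep_index reps. \<epsilon> k = 1} = c)"

end

theory Submission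
  imports Defs "Jordan_Normal_Form.Schur_Decomposition"
begin


lemma mult_entry:
  assumes "A \<in> carrier_mat nr m" "B \<in> carrier_mat m nc" "i < nr" "j < nc"
  shows "(A * B) $$ (i, j) = (\<Sum>k<m. A $$ (i, k) * B $$ (k, j))"
  using assms by (auto simp: scalar_prod_def lessThan_atLeast0 intro!: sum.cong)

lemma mv_entry:
  assumes "A \<in> carrier_mat nr m" "v \<in> carrier_vec m" "i < nr"
  shows "(A *\<^sub>v v) $ i = (\<Sum>k<m. A $$ (i, k) * v $ k)"
  using assms by (auto simp: scalar_prod_def lessThan_atLeast0 mult.commute intro!: sum.cong)

definition injm :: "complex mat \<Rightarrow> nat \<Rightarrow> bool" where
  "injm A m \<longleftrightarrow> (\<forall>v\<in>carrier_vec m. A *\<^sub>v v = 0\<^sub>v (dim_row A) \<longrightarrow> v = 0\<^sub>v m)"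

lemma det_zero_col:
  assumes Z: "(Z :: complex mat) \<in> carrier_mat k k" and j: "j < k" and z: "\<forall>i<k. Z $$ (i, j) = 0"
  shows "det Z = 0"
proof -
  have "Z *\<^sub>v unit_vec k j = 0\<^sub>v k"
  proof (rule eq_vecI)
    fix i assume "i < dim_vec (0\<^sub>v k :: complex vec)"
    then have i: "i < k" by simp
    have "(Z *\<^sub>v unit_vec k j) $ i = (\<Sum>l<k. Z $$ (i, l) * unit_vec k j $ l)"
      using Z i by (intro mv_entry) auto
    also have "\<dots> = (\<Sum>l<k. if l = j then Z $$ (i, j) else 0)"
      by (rule sum.cong) (auto simp: unit_vec_def)
    also have "\<dots> = 0" using z i j by simp
    finally show "(Z *\<^sub>v unit_vec k j) $ i = 0\<^sub>v k $ i" using i by simp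
  qed (use Z in auto)
  moreover have "unit_vec k j \<noteq> (0\<^sub>v k :: complex vec)"
  proof
    assume "unit_vec k j = (0\<^sub>v k :: complex vec)"
    then have "unit_vec k j $ j = (0\<^sub>v k :: complex vec) $ j" by simp
    then show False using j by simp
  qed
  moreover have "unit_vec k j \<in> carrier_vec k" by simp
  ultimately show ?thesis using det_0_iff_vec_prod_zero[OF Z] by blast
qed

lemma inj_le:
  assumes A: "A \<in> carrier_mat e d" and inj: "injm A d"
  shows "d \<le> e"
proof (rule ccontr)
  assume "\<not> d \<le> e"
  then have de: "e < d" by simp
  define Z where "Z = mat d d (\<lambda>(i, j). if i < e then A $$ (i, j) else 0)"
  have Zc: "Z \<in> carrier_mat d d" unfolding Z_def by simp
  have "det Z \<noteq> 0"
  proof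
    assume "det Z = 0"
    then obtain v where v: "v \<in> carrier_vec d" "v \<noteq> 0\<^sub>v d" "Z *\<^sub>v v = 0\<^sub>v d"
      using det_0_iff_vec_prod_zero[OF Zc] by auto
    have "A *\<^sub>v v = 0\<^sub>v e"
    proof (rule eq_vecI)
      fix i assume "i < dim_vec (0\<^sub>v e :: complex vec)"
      then have i: "i < e" by simp
      have "(A *\<^sub>v v) $ i = (\<Sum>k<d. A $$ (i, k) * v $ k)" using mv_entry[OF A v(1) i] .
      also have "\<dots> = (\<Sum>k<d. Z $$ (i, k) * v $ k)"
        by (rule sum.cong) (use i de in \<open>auto simp: Z_def\<close>)
      also have "\<dots> = (Z *\<^sub>v v) $ i" using mv_entry[OF Zc v(1)] i de by simp
      also have "\<dots> = 0" using v(3) i de by simp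
      finally show "(A *\<^sub>v v) $ i = 0\<^sub>v e $ i" using i by simp
    qed (use A in auto)
    then show False using inj v A unfolding injm_def by auto
  qed
  moreover have "det (transpose_mat Z) = 0"
    by (rule det_zero_col[of _ d "d - 1"]) (use de Zc in \<open>auto simp: Z_def\<close>)
  ultimately show False using det_transpose[OF Zc] by simp
qed

lemma square_inj_inverse:
  assumes A: "A \<in> carrier_mat k k" and inj: "injm A k"
  shows "\<exists>B\<in>carrier_mat k k. A * B = 1\<^sub>m k \<and> B * A = 1\<^sub>m k"
proof -
  have "det A \<noteq> 0"
    using det_0_iff_vec_prod_zero[OF A] inj A unfolding injm_def by auto
  from det_non_zero_imp_unit[OF A this, of undefined]
  show ?thesis unfolding Units_def ring_mat_def by auto
qed

lemma injm_cancel: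
  assumes B: "B \<in> carrier_mat k m" and inj: "injm B m"
    and X: "X \<in> carrier_mat m c" and Y: "Y \<in> carrier_mat m c" and eq: "B * X = B * Y"
  shows "X = Y"
proof (rule eq_matI)
  fix i j assume i: "i < dim_row Y" and j: "j < dim_col Y"
  have jc: "j < c" using j Y by simp
  have "col (B * X) j = col (B * Y) j" using eq by simp
  then have "B *\<^sub>v col X j = B *\<^sub>v col Y j" unfolding col_mult2[OF B X jc] col_mult2[OF B Y jc] .
  moreover have "B *\<^sub>v (col X j - col Y j) = B *\<^sub>v col X j - B *\<^sub>v col Y j"
    by (rule mult_minus_distrib_mat_vec[OF B]) (use X Y in auto)
  ultimately have "B *\<^sub>v (col X j - col Y j) = 0\<^sub>v k"
    using minus_cancel_vec[of "B *\<^sub>v col Y j" k] B Y j by simp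
  moreover have "col X j - col Y j \<in> carrier_vec m" using X Y j by auto
  ultimately have "col X j - col Y j = 0\<^sub>v m" using inj B unfolding injm_def by auto
  then have "(col X j - col Y j) $ i = 0" using i Y by simp
  then show "X $$ (i, j) = Y $$ (i, j)" using i j X Y by auto
qed (use X Y in auto)

lemma injm_mult:
  assumes A: "A \<in> carrier_mat k m" "injm A m" and B: "B \<in> carrier_mat m l" "injm B l"
  shows "injm (A * B) l"
  unfolding injm_def
proof (intro ballI impI)
  fix v :: "complex vec" assume v: "v \<in> carrier_vec l" and z: "A * B *\<^sub>v v = 0\<^sub>v (dim_row (A * B))"
  then have "A *\<^sub>v (B *\<^sub>v v) = 0\<^sub>v k" using A B by simp
  then have "B *\<^sub>v v = 0\<^sub>v m" using A B v unfolding injm_def by auto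
  then show "v = 0\<^sub>v l" using B v unfolding injm_def by auto
qed

lemma injm_invertible:
  assumes A: "A \<in> carrier_mat k m" "injm A m" and P: "P \<in> carrier_mat m m" "Q \<in> carrier_mat m m" "P * Q = 1\<^sub>m m"
  shows "injm (A * P) m"
proof -
  have "injm P m" unfolding injm_def
  proof (intro ballI impI)
    fix v :: "complex vec" assume v: "v \<in> carrier_vec m" and z: "P *\<^sub>v v = 0\<^sub>v (dim_row P)"
    have "Q * P = 1\<^sub>m m" using mat_mult_left_right_inverse[OF P(1) P(2) P(3)] .
    then have "v = Q *\<^sub>v (P *\<^sub>v v)" using P v by (metis assoc_mult_mat_vec one_mult_mat_vec)
    then show "v = 0\<^sub>v m" using z P by auto
  qed
  then show ?thesis using injm_mult A P by blast
qed


lemma mv_unit: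
  fixes X :: "complex mat"
  assumes "X \<in> carrier_mat e d" "i < e" "j < d"
  shows "(X *\<^sub>v unit_vec d j) $ i = X $$ (i, j)"
proof -
  have "(X *\<^sub>v unit_vec d j) $ i = (\<Sum>k<d. X $$ (i, k) * unit_vec d j $ k)"
    using assms by (intro mv_entry) auto
  also have "\<dots> = (\<Sum>k<d. if k = j then X $$ (i, j) else 0)"
    by (rule sum.cong) (auto simp: unit_vec_def)
  also have "\<dots> = X $$ (i, j)" using assms by simp
  finally show ?thesis .
qed

lemma mat_eq_by_unit:
  fixes X :: "complex mat"
  assumes X: "X \<in> carrier_mat e d" and Y: "Y \<in> carrier_mat e d"
    and h: "\<And>j. j < d \<Longrightarrow> X *\<^sub>v unit_vec d j = Y *\<^sub>v unit_vec d j"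
  shows "X = Y"
proof (rule eq_matI)
  fix i j assume "i < dim_row Y" "j < dim_col Y"
  then show "X $$ (i, j) = Y $$ (i, j)"
    using mv_unit[OF X, of i j] mv_unit[OF Y, of i j] h[of j] Y by auto
qed (use X Y in auto)

locale fgrp = group G for G (structure) +
  assumes fin: "finite (carrier G)"
begin

lemma rep_carrier: "is_rep G d \<rho> \<Longrightarrow> g \<in> carrier G \<Longrightarrow> \<rho> g \<in> carrier_mat d d"
  unfolding is_rep_def by auto
lemma rep_mult: "is_rep G d \<rho> \<Longrightarrow> g \<in> carrier G \<Longrightarrow> h \<in> carrier G \<Longrightarrow> \<rho> (g \<otimes> h) = \<rho> g * \<rho> h"
  unfolding is_rep_def by auto
lemma rep_one: "is_rep G d \<rho> \<Longrightarrow> \<rho> \<one> = 1\<^sub>m d"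
  unfolding is_rep_def by auto
lemma rep_inv1: "is_rep G d \<rho> \<Longrightarrow> g \<in> carrier G \<Longrightarrow> \<rho> (inv g) * \<rho> g = 1\<^sub>m d"
  using rep_mult[of d \<rho> "inv g" g] rep_one[of d \<rho>] by simp
lemma rep_inv2: "is_rep G d \<rho> \<Longrightarrow> g \<in> carrier G \<Longrightarrow> \<rho> g * \<rho> (inv g) = 1\<^sub>m d"
  using rep_mult[of d \<rho> g "inv g"] rep_one[of d \<rho>] by simp

lemma irr_rep: "irreducible_rep G d \<rho> \<Longrightarrow> is_rep G d \<rho>"
  unfolding irreducible_rep_def by auto
lemma irr_pos: "irreducible_rep G d \<rho> \<Longrightarrow> 0 < d"
  unfolding irreducible_rep_def by auto

lemma sum_right: "h \<in> carrier G \<Longrightarrow> (\<Sum>g\<in>carrier G. f (g \<otimes> h)) = (\<Sum>g\<in>carrier G. f g)"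
  by (rule sum.reindex_bij_witness[of _ "\<lambda>g. g \<otimes> inv h" "\<lambda>g. g \<otimes> h"])
     (auto simp: m_assoc)
lemma sum_left: "h \<in> carrier G \<Longrightarrow> (\<Sum>g\<in>carrier G. f (h \<otimes> g)) = (\<Sum>g\<in>carrier G. f g)"
  by (rule sum.reindex_bij_witness[of _ "\<lambda>g. inv h \<otimes> g" "\<lambda>g. h \<otimes> g"])
     (auto simp: m_assoc[symmetric])
lemma sum_inv: "(\<Sum>g\<in>carrier G. f (inv g)) = (\<Sum>g\<in>carrier G. f g)"
  by (rule sum.reindex_bij_witness[of _ "\<lambda>g. inv g" "\<lambda>g. inv g"]) auto

lemma schur_square:
  assumes irr: "irreducible_rep G d \<rho>" and X: "X \<in> carrier_mat d d"
    and comm: "\<forall>g\<in>carrier G. X * \<rho> g = \<rho> g * X"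
  shows "\<exists>c. X = c \<cdot>\<^sub>m 1\<^sub>m d"
proof -
  have rep: "is_rep G d \<rho>" and d: "0 < d" using irr irr_rep irr_pos by auto
  obtain as where as: "char_poly X = (\<Prod>a\<leftarrow>as. [:- a, 1:])" "length as = d"
    using char_poly_factorized[OF X] by auto
  then obtain c rest where asc: "as = c # rest" using d by (cases as) auto
  have "poly (char_poly X) c = 0" unfolding as(1) asc by simp
  then have "eigenvalue X c" using eigenvalue_root_char_poly[OF X] by simp
  then obtain v where v: "v \<in> carrier_vec d" "v \<noteq> 0\<^sub>v d" "X *\<^sub>v v = c \<cdot>\<^sub>v v"
    unfolding eigenvalue_def eigenvector_def using X by auto
  define W where "W = {w \<in> carrier_vec d. X *\<^sub>v w = c \<cdot>\<^sub>v w}"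
  have inv: "invariant_subspace G d \<rho> W"
    unfolding invariant_subspace_def
  proof (intro conjI ballI allI)
    show "W \<subseteq> carrier_vec d" unfolding W_def by auto
    show "0\<^sub>v d \<in> W" unfolding W_def using X by auto
  next
    fix w1 w2 assume "w1 \<in> W" "w2 \<in> W"
    then show "w1 + w2 \<in> W" unfolding W_def using X
      by (auto simp: mult_add_distrib_mat_vec smult_add_distrib_vec)
  next
    fix a w assume "w \<in> W"
    then show "a \<cdot>\<^sub>v w \<in> W" unfolding W_def using X
      by (auto simp: mult_mat_vec smult_smult_assoc mult.commute)
  next
    fix g w assume g: "g \<in> carrier G" and w: "w \<in> W"
    have rg: "\<rho> g \<in> carrier_mat d d" using rep_carrier[OF rep g] .
    have "X *\<^sub>v (\<rho> g *\<^sub>v w) = (X * \<rho> g) *\<^sub>v w" using X rg w unfolding W_def by auto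
    also have "\<dots> = (\<rho> g * X) *\<^sub>v w" using comm g by simp
    also have "\<dots> = \<rho> g *\<^sub>v (X *\<^sub>v w)" using X rg w unfolding W_def by auto
    also have "\<dots> = c \<cdot>\<^sub>v (\<rho> g *\<^sub>v w)" using w rg unfolding W_def by (auto simp: mult_mat_vec)
    finally show "\<rho> g *\<^sub>v w \<in> W" using rg w unfolding W_def by auto
  qed
  have "W = carrier_vec d"
    using irr inv v unfolding irreducible_rep_def W_def by auto
  then have all: "\<And>w. w \<in> carrier_vec d \<Longrightarrow> X *\<^sub>v w = c \<cdot>\<^sub>v w" unfolding W_def by auto
  have "X = c \<cdot>\<^sub>m 1\<^sub>m d"
  proof (rule eq_matI)
    fix i j assume ij: "i < dim_row (c \<cdot>\<^sub>m 1\<^sub>m d)" "j < dim_col (c \<cdot>\<^sub>m 1\<^sub>m d :: complex mat)"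
    then have i: "i < d" and j: "j < d" by auto
    have "X $$ (i, j) = (X *\<^sub>v unit_vec d j) $ i" using mv_unit[OF X i j] by simp
    also have "\<dots> = (c \<cdot>\<^sub>v unit_vec d j) $ i" using all j by simp
    also have "\<dots> = (c \<cdot>\<^sub>m 1\<^sub>m d) $$ (i, j)" using i j by (simp add: unit_vec_def)
    finally show "X $$ (i, j) = (c \<cdot>\<^sub>m 1\<^sub>m d) $$ (i, j)" .
  qed (use X in auto)
  then show ?thesis by blast
qed

end


lemma surj_right_inverse:
  fixes X :: "complex mat"
  assumes X: "X \<in> carrier_mat e d" and surj: "\<forall>w\<in>carrier_vec e. \<exists>v\<in>carrier_vec d. w = X *\<^sub>v v"
  shows "\<exists>Y\<in>carrier_mat d e. X * Y = 1\<^sub>m e"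
proof -
  define pre where "pre j = (SOME v. v \<in> carrier_vec d \<and> unit_vec e j = X *\<^sub>v v)" for j
  have pre: "pre j \<in> carrier_vec d \<and> unit_vec e j = X *\<^sub>v pre j" for j
    unfolding pre_def by (rule someI_ex) (use surj in auto)
  define Y where "Y = mat d e (\<lambda>(i, j). pre j $ i)"
  have Y: "Y \<in> carrier_mat d e" unfolding Y_def by simp
  have "X * Y = 1\<^sub>m e"
  proof (rule eq_matI)
    fix i j assume "i < dim_row (1\<^sub>m e :: complex mat)" "j < dim_col (1\<^sub>m e :: complex mat)"
    then have i: "i < e" and j: "j < e" by auto
    have "(X * Y) $$ (i, j) = (\<Sum>k<d. X $$ (i, k) * Y $$ (k, j))" by (rule mult_entry[OF X Y i j])
    also have "\<dots> = (\<Sum>k<d. X $$ (i, k) * pre j $ k)" by (rule sum.cong) (use j in \<open>auto simp: Y_def\<close>)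
    also have "\<dots> = (X *\<^sub>v pre j) $ i" using mv_entry[OF X _ i, of "pre j"] pre by simp
    also have "\<dots> = unit_vec e j $ i" using pre[of j] by simp
    finally show "(X * Y) $$ (i, j) = 1\<^sub>m e $$ (i, j)" using i j by (simp add: unit_vec_def)
  qed (use X Y in auto)
  then show ?thesis using Y by blast
qed

context fgrp
begin

lemma schur_noneq:
  assumes irr1: "irreducible_rep G d \<rho>" and irr2: "irreducible_rep G e \<tau>"
    and X: "X \<in> carrier_mat e d"
    and comm: "\<forall>g\<in>carrier G. X * \<rho> g = \<tau> g * X"
    and ne: "\<not> equiv_rep G d \<rho> e \<tau>"
  shows "X = 0\<^sub>m e d"
proof (rule ccontr)
  assume nz: "X \<noteq> 0\<^sub>m e d"
  have rep1: "is_rep G d \<rho>" and rep2: "is_rep G e \<tau>" using irr1 irr2 irr_rep by auto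
  obtain i0 j0 where ij0: "i0 < e" "j0 < d" "X $$ (i0, j0) \<noteq> 0"
    using nz X by (metis carrier_matD(1) carrier_matD(2) eq_matI index_zero_mat(1) index_zero_mat(2) index_zero_mat(3))
  define K where "K = {v \<in> carrier_vec d. X *\<^sub>v v = 0\<^sub>v e}"
  have invK: "invariant_subspace G d \<rho> K"
    unfolding invariant_subspace_def
  proof (intro conjI ballI allI)
    show "K \<subseteq> carrier_vec d" unfolding K_def by auto
    show "0\<^sub>v d \<in> K" unfolding K_def using X by auto
  next
    fix w1 w2 assume "w1 \<in> K" "w2 \<in> K"
    then show "w1 + w2 \<in> K" unfolding K_def using X
      by (auto simp: mult_add_distrib_mat_vec)
  next
    fix a w assume "w \<in> K"
    then show "a \<cdot>\<^sub>v w \<in> K" unfolding K_def using X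
      by (auto simp: mult_mat_vec)
  next
    fix g w assume g: "g \<in> carrier G" and w: "w \<in> K"
    have rg: "\<rho> g \<in> carrier_mat d d" using rep_carrier[OF rep1 g] .
    have tg: "\<tau> g \<in> carrier_mat e e" using rep_carrier[OF rep2 g] .
    have "X *\<^sub>v (\<rho> g *\<^sub>v w) = (X * \<rho> g) *\<^sub>v w" using X rg w unfolding K_def by auto
    also have "\<dots> = (\<tau> g * X) *\<^sub>v w" using comm g by simp
    also have "\<dots> = \<tau> g *\<^sub>v (X *\<^sub>v w)" using X tg w unfolding K_def by auto
    also have "\<dots> = 0\<^sub>v e" using w tg unfolding K_def by auto
    finally show "\<rho> g *\<^sub>v w \<in> K" using rg w unfolding K_def by auto
  qed
  have "unit_vec d j0 \<notin> K"
  proof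
    assume "unit_vec d j0 \<in> K"
    then have "(X *\<^sub>v unit_vec d j0) $ i0 = 0" unfolding K_def using ij0 by simp
    then show False using mv_unit[OF X ij0(1,2)] ij0 by simp
  qed
  then have "K \<noteq> carrier_vec d" using ij0 by auto
  then have "K = {0\<^sub>v d}" using irr1 invK unfolding irreducible_rep_def by auto
  then have injX: "injm X d" unfolding injm_def K_def using X by auto
  define I where "I = {w. \<exists>v\<in>carrier_vec d. w = X *\<^sub>v v}"
  have invI: "invariant_subspace G e \<tau> I"
    unfolding invariant_subspace_def
  proof (intro conjI ballI allI)
    show "I \<subseteq> carrier_vec e" unfolding I_def using X by auto
    show "0\<^sub>v e \<in> I" unfolding I_def using X by (intro CollectI bexI[of _ "0\<^sub>v d"]) auto
  next
    fix w1 w2 assume "w1 \<in> I" "w2 \<in> I"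
    then obtain v1 v2 where "v1 \<in> carrier_vec d" "v2 \<in> carrier_vec d" "w1 = X *\<^sub>v v1" "w2 = X *\<^sub>v v2"
      unfolding I_def by auto
    then show "w1 + w2 \<in> I" unfolding I_def using X
      by (intro CollectI bexI[of _ "v1 + v2"]) (auto simp: mult_add_distrib_mat_vec)
  next
    fix a w assume "w \<in> I"
    then obtain v where "v \<in> carrier_vec d" "w = X *\<^sub>v v" unfolding I_def by auto
    then show "a \<cdot>\<^sub>v w \<in> I" unfolding I_def using X
      by (intro CollectI bexI[of _ "a \<cdot>\<^sub>v v"]) (auto simp: mult_mat_vec)
  next
    fix g w assume g: "g \<in> carrier G" and w: "w \<in> I"
    then obtain v where v: "v \<in> carrier_vec d" "w = X *\<^sub>v v" unfolding I_def by auto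
    have rg: "\<rho> g \<in> carrier_mat d d" using rep_carrier[OF rep1 g] .
    have tg: "\<tau> g \<in> carrier_mat e e" using rep_carrier[OF rep2 g] .
    have "\<tau> g *\<^sub>v w = (\<tau> g * X) *\<^sub>v v" using X tg v by auto
    also have "\<dots> = (X * \<rho> g) *\<^sub>v v" using comm g by simp
    also have "\<dots> = X *\<^sub>v (\<rho> g *\<^sub>v v)" using X rg v by auto
    finally show "\<tau> g *\<^sub>v w \<in> I" unfolding I_def using rg v by auto
  qed
  have "X *\<^sub>v unit_vec d j0 \<in> I" unfolding I_def using ij0 by auto
  moreover have "X *\<^sub>v unit_vec d j0 \<noteq> 0\<^sub>v e"
  proof
    assume "X *\<^sub>v unit_vec d j0 = 0\<^sub>v e"
    then have "(X *\<^sub>v unit_vec d j0) $ i0 = 0" using ij0 by simp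
    then show False using mv_unit[OF X ij0(1,2)] ij0 by simp
  qed
  ultimately have "I \<noteq> {0\<^sub>v e}" by auto
  then have "I = carrier_vec e" using irr2 invI unfolding irreducible_rep_def by auto
  then have surj: "\<forall>w\<in>carrier_vec e. \<exists>v\<in>carrier_vec d. w = X *\<^sub>v v" unfolding I_def by auto
  obtain Y where Y: "Y \<in> carrier_mat d e" "X * Y = 1\<^sub>m e" using surj_right_inverse[OF X surj] by auto
  have injY: "injm Y e" unfolding injm_def
  proof (intro ballI impI)
    fix v :: "complex vec" assume v: "v \<in> carrier_vec e" and z: "Y *\<^sub>v v = 0\<^sub>v (dim_row Y)"
    have "v = 1\<^sub>m e *\<^sub>v v" using v by simp
    also have "\<dots> = (X * Y) *\<^sub>v v" using Y(2) by simp
    also have "\<dots> = X *\<^sub>v (Y *\<^sub>v v)" by (rule assoc_mult_mat_vec) (use X Y v in auto)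
    also have "\<dots> = 0\<^sub>v e" using z X Y by auto
    finally show "v = 0\<^sub>v e" .
  qed
  have "d \<le> e" by (rule inj_le[OF X injX])
  moreover have "e \<le> d" by (rule inj_le[OF Y(1) injY])
  ultimately have de: "d = e" by simp
  obtain B where B: "B \<in> carrier_mat d d" "X * B = 1\<^sub>m d" "B * X = 1\<^sub>m d"
    using square_inj_inverse[of X d] X injX de by auto
  have "invertible_mat X" unfolding invertible_mat_def inverts_mat_def square_mat.simps
    using B X de by auto
  then have "equiv_rep G d \<rho> e \<tau>" unfolding equiv_rep_def using X de comm by auto
  then show False using ne by simp
qed

end


context fgrp
begin

definition avgm :: "('a \<Rightarrow> complex mat) \<Rightarrow> ('a \<Rightarrow> complex mat) \<Rightarrow> nat \<Rightarrow> nat \<Rightarrow> nat \<Rightarrow> nat \<Rightarrow> complex mat" where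
  "avgm \<tau> \<rho> e d b c = mat e d (\<lambda>(p, q). \<Sum>g\<in>carrier G. \<tau> (inv g) $$ (p, b) * \<rho> g $$ (c, q))"

lemma swap_helper:
  fixes a :: "'x \<Rightarrow> complex"
  shows "(\<Sum>r<d. (\<Sum>g\<in>A. a g * bb g r) * cc r) = (\<Sum>g\<in>A. a g * (\<Sum>r<d. bb g r * cc r))"
proof -
  have "(\<Sum>r<d. (\<Sum>g\<in>A. a g * bb g r) * cc r) = (\<Sum>r<d. \<Sum>g\<in>A. a g * (bb g r * cc r))"
    by (simp add: sum_distrib_right mult.assoc)
  also have "\<dots> = (\<Sum>g\<in>A. \<Sum>r<d. a g * (bb g r * cc r))" by (rule sum.swap)
  also have "\<dots> = (\<Sum>g\<in>A. a g * (\<Sum>r<d. bb g r * cc r))" by (simp add: sum_distrib_left)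
  finally show ?thesis .
qed

lemma swap_helper2:
  fixes t :: "nat \<Rightarrow> complex"
  shows "(\<Sum>r<e. t r * (\<Sum>g\<in>A. a g r * bb g)) = (\<Sum>g\<in>A. (\<Sum>r<e. t r * a g r) * bb g)"
proof -
  have "(\<Sum>r<e. t r * (\<Sum>g\<in>A. a g r * bb g)) = (\<Sum>r<e. \<Sum>g\<in>A. (t r * a g r) * bb g)"
    by (simp add: sum_distrib_left mult.assoc)
  also have "\<dots> = (\<Sum>g\<in>A. \<Sum>r<e. (t r * a g r) * bb g)" by (rule sum.swap)
  also have "\<dots> = (\<Sum>g\<in>A. (\<Sum>r<e. t r * a g r) * bb g)" by (simp add: sum_distrib_right)
  finally show ?thesis .
qed

lemma avgm_carrier: "avgm \<tau> \<rho> e d b c \<in> carrier_mat e d"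
  unfolding avgm_def by simp

lemma avgm_intertw:
  assumes r1: "is_rep G d \<rho>" and r2: "is_rep G e \<tau>" and b: "b < e" and c: "c < d"
    and h: "h \<in> carrier G"
  shows "avgm \<tau> \<rho> e d b c * \<rho> h = \<tau> h * avgm \<tau> \<rho> e d b c"
proof (rule eq_matI)
  let ?X = "avgm \<tau> \<rho> e d b c"
  have X: "?X \<in> carrier_mat e d" by (rule avgm_carrier)
  have rh: "\<rho> h \<in> carrier_mat d d" and th: "\<tau> h \<in> carrier_mat e e"
    using rep_carrier r1 r2 h by auto
  fix p q assume "p < dim_row (\<tau> h * ?X)" "q < dim_col (\<tau> h * ?X)"
  then have p: "p < e" and q: "q < d" using th X by auto
  have "(?X * \<rho> h) $$ (p, q) = (\<Sum>r<d. ?X $$ (p, r) * \<rho> h $$ (r, q))"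
    by (rule mult_entry[OF X rh p q])
  also have "\<dots> = (\<Sum>r<d. (\<Sum>g\<in>carrier G. \<tau> (inv g) $$ (p, b) * \<rho> g $$ (c, r)) * \<rho> h $$ (r, q))"
    by (rule sum.cong) (use p in \<open>auto simp: avgm_def\<close>)
  also have "\<dots> = (\<Sum>g\<in>carrier G. \<tau> (inv g) $$ (p, b) * (\<Sum>r<d. \<rho> g $$ (c, r) * \<rho> h $$ (r, q)))"
    by (rule swap_helper)
  also have "\<dots> = (\<Sum>g\<in>carrier G. \<tau> (inv g) $$ (p, b) * \<rho> (g \<otimes> h) $$ (c, q))"
  proof (rule sum.cong)
    fix g assume g: "g \<in> carrier G"
    have "\<rho> (g \<otimes> h) $$ (c, q) = (\<rho> g * \<rho> h) $$ (c, q)" using rep_mult[OF r1 g h] by simp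
    also have "\<dots> = (\<Sum>r<d. \<rho> g $$ (c, r) * \<rho> h $$ (r, q))"
      by (rule mult_entry[OF rep_carrier[OF r1 g] rh c q])
    finally show "\<tau> (inv g) $$ (p, b) * (\<Sum>r<d. \<rho> g $$ (c, r) * \<rho> h $$ (r, q)) =
      \<tau> (inv g) $$ (p, b) * \<rho> (g \<otimes> h) $$ (c, q)" by simp
  qed simp
  also have "\<dots> = (\<Sum>g\<in>carrier G. \<tau> (h \<otimes> inv g) $$ (p, b) * \<rho> g $$ (c, q))"
  proof -
    have "(\<Sum>g\<in>carrier G. \<tau> (h \<otimes> inv g) $$ (p, b) * \<rho> g $$ (c, q)) =
          (\<Sum>g\<in>carrier G. \<tau> (h \<otimes> inv (g \<otimes> h)) $$ (p, b) * \<rho> (g \<otimes> h) $$ (c, q))"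
      by (rule sum_right[OF h, symmetric])
    also have "\<dots> = (\<Sum>g\<in>carrier G. \<tau> (inv g) $$ (p, b) * \<rho> (g \<otimes> h) $$ (c, q))"
    proof (rule sum.cong)
      fix g assume g: "g \<in> carrier G"
      have "h \<otimes> inv (g \<otimes> h) = inv g" using g h
        by (simp add: inv_mult_group m_assoc[symmetric])
      then show "\<tau> (h \<otimes> inv (g \<otimes> h)) $$ (p, b) * \<rho> (g \<otimes> h) $$ (c, q) =
        \<tau> (inv g) $$ (p, b) * \<rho> (g \<otimes> h) $$ (c, q)" by simp
    qed simp
    finally show ?thesis by simp
  qed
  also have "\<dots> = (\<Sum>g\<in>carrier G. (\<Sum>r<e. \<tau> h $$ (p, r) * \<tau> (inv g) $$ (r, b)) * \<rho> g $$ (c, q))"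
  proof (rule sum.cong)
    fix g assume g: "g \<in> carrier G"
    have ig: "inv g \<in> carrier G" using g by simp
    have "\<tau> (h \<otimes> inv g) $$ (p, b) = (\<tau> h * \<tau> (inv g)) $$ (p, b)" using rep_mult[OF r2 h ig] by simp
    also have "\<dots> = (\<Sum>r<e. \<tau> h $$ (p, r) * \<tau> (inv g) $$ (r, b))"
      by (rule mult_entry[OF th rep_carrier[OF r2 ig] p b])
    finally show "\<tau> (h \<otimes> inv g) $$ (p, b) * \<rho> g $$ (c, q) =
      (\<Sum>r<e. \<tau> h $$ (p, r) * \<tau> (inv g) $$ (r, b)) * \<rho> g $$ (c, q)" by simp
  qed simp
  also have "\<dots> = (\<Sum>r<e. \<tau> h $$ (p, r) * (\<Sum>g\<in>carrier G. \<tau> (inv g) $$ (r, b) * \<rho> g $$ (c, q)))"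
    by (rule swap_helper2[symmetric])
  also have "\<dots> = (\<Sum>r<e. \<tau> h $$ (p, r) * ?X $$ (r, q))"
    by (rule sum.cong) (use q in \<open>auto simp: avgm_def\<close>)
  also have "\<dots> = (\<tau> h * ?X) $$ (p, q)"
    by (rule mult_entry[OF th X p q, symmetric])
  finally show "(?X * \<rho> h) $$ (p, q) = (\<tau> h * ?X) $$ (p, q)" .
qed (insert rep_carrier[OF r1 h] rep_carrier[OF r2 h] avgm_carrier[of \<tau> \<rho> e d b c], auto)

lemma orth_ne:
  assumes irr1: "irreducible_rep G d \<rho>" and irr2: "irreducible_rep G e \<tau>"
    and ne: "\<not> equiv_rep G d \<rho> e \<tau>"
    and p: "p < e" and b: "b < e" and c: "c < d" and q: "q < d"
  shows "(\<Sum>g\<in>carrier G. \<tau> (inv g) $$ (p, b) * \<rho> g $$ (c, q)) = 0"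
proof -
  have "avgm \<tau> \<rho> e d b c = 0\<^sub>m e d"
    by (rule schur_noneq[OF irr1 irr2 avgm_carrier _ ne])
       (use avgm_intertw irr_rep[OF irr1] irr_rep[OF irr2] b c in auto)
  then have "avgm \<tau> \<rho> e d b c $$ (p, q) = 0" using p q by simp
  then show ?thesis using p q by (simp add: avgm_def)
qed

lemma orth_eq:
  assumes irr: "irreducible_rep G d \<rho>"
    and p: "p < d" and b: "b < d" and c: "c < d" and q: "q < d"
  shows "(\<Sum>g\<in>carrier G. \<rho> (inv g) $$ (p, b) * \<rho> g $$ (c, q)) =
     (if p = q \<and> b = c then of_nat (card (carrier G)) / of_nat d else 0)"
proof -
  have rep: "is_rep G d \<rho>" and d: "0 < d" using irr irr_rep irr_pos by auto
  let ?X = "avgm \<rho> \<rho> d d b c"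
  have "\<exists>\<kappa>. ?X = \<kappa> \<cdot>\<^sub>m 1\<^sub>m d"
    by (rule schur_square[OF irr avgm_carrier]) (use avgm_intertw[OF rep rep b c] in auto)
  then obtain \<kappa> where k: "?X = \<kappa> \<cdot>\<^sub>m 1\<^sub>m d" by auto
  have "(\<Sum>p<d. ?X $$ (p, p)) = (\<Sum>p<d. \<Sum>g\<in>carrier G. \<rho> (inv g) $$ (p, b) * \<rho> g $$ (c, p))"
    by (rule sum.cong) (auto simp: avgm_def)
  also have "\<dots> = (\<Sum>g\<in>carrier G. \<Sum>p<d. \<rho> g $$ (c, p) * \<rho> (inv g) $$ (p, b))"
    by (subst sum.swap) (simp add: mult.commute)
  also have "\<dots> = (\<Sum>g\<in>carrier G. (\<rho> g * \<rho> (inv g)) $$ (c, b))"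
  proof (rule sum.cong)
    fix g assume g: "g \<in> carrier G"
    show "(\<Sum>p<d. \<rho> g $$ (c, p) * \<rho> (inv g) $$ (p, b)) = (\<rho> g * \<rho> (inv g)) $$ (c, b)"
      by (rule mult_entry[symmetric]) (use rep_carrier[OF rep] g b c in auto)
  qed simp
  also have "\<dots> = (\<Sum>g\<in>carrier G. (if c = b then 1 else 0))"
    by (rule sum.cong) (use rep_inv2[OF rep] b c in auto)
  finally have tr: "(\<Sum>p<d. ?X $$ (p, p)) = (if c = b then of_nat (card (carrier G)) else 0)" by simp
  have "(\<Sum>p<d. ?X $$ (p, p)) = of_nat d * \<kappa>" using k by simp
  then have kv: "\<kappa> = (if c = b then of_nat (card (carrier G)) / of_nat d else 0)"
    using tr d by (auto simp: field_simps split: if_splits)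
  have "(\<Sum>g\<in>carrier G. \<rho> (inv g) $$ (p, b) * \<rho> g $$ (c, q)) = ?X $$ (p, q)"
    using p q by (simp add: avgm_def)
  also have "\<dots> = (if p = q then \<kappa> else 0)" using k p q by simp
  finally show ?thesis using kv by auto
qed

end


lemma mat_col_eq:
  assumes "A \<in> carrier_mat r c" "A' \<in> carrier_mat r c" "\<And>j. j < c \<Longrightarrow> col A j = col A' j"
  shows "A = A'"
proof (rule eq_matI)
  fix i j assume "i < dim_row A'" "j < dim_col A'"
  then show "A $$ (i, j) = A' $$ (i, j)"
    using assms index_col[of i A j] index_col[of i A' j] by (metis carrier_matD(1) carrier_matD(2))
qed (use assms in auto)

lemma subspace_basis:
  assumes Uc: "U \<subseteq> carrier_vec k" and U0: "0\<^sub>v k \<in> U"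
    and Uadd: "\<forall>v\<in>U. \<forall>w\<in>U. v + w \<in> U" and Usm: "\<forall>a. \<forall>v\<in>U. a \<cdot>\<^sub>v v \<in> U"
  shows "\<exists>m B. B \<in> carrier_mat k m \<and> injm B m \<and> (\<forall>c\<in>carrier_vec m. B *\<^sub>v c \<in> U) \<and>
               (\<forall>u\<in>U. \<exists>c\<in>carrier_vec m. u = B *\<^sub>v c)"
proof -
  define P where "P m \<longleftrightarrow> (\<exists>B. B \<in> carrier_mat k m \<and> injm B m \<and> (\<forall>c\<in>carrier_vec m. B *\<^sub>v c \<in> U))" for m
  have P0: "P 0" unfolding P_def
  proof (intro exI[of _ "0\<^sub>m k 0"] conjI)
    show "injm (0\<^sub>m k 0) 0" unfolding injm_def by auto
    show "\<forall>c\<in>carrier_vec 0. 0\<^sub>m k 0 *\<^sub>v c \<in> U"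
    proof
      fix c :: "complex vec" assume c0: "c \<in> carrier_vec 0"
      have "0\<^sub>m k 0 *\<^sub>v c = 0\<^sub>v k" by (rule eq_vecI) (use c0 in \<open>auto simp: scalar_prod_def\<close>)
      then show "0\<^sub>m k 0 *\<^sub>v c \<in> U" using U0 by simp
    qed
  qed simp
  have Pb: "P m \<Longrightarrow> m \<le> k" for m unfolding P_def using inj_le by auto
  define m where "m = (GREATEST m. P m)"
  have Pm: "P m" unfolding m_def by (rule GreatestI_nat[of P 0 k]) (use P0 Pb in auto)
  have mmax: "P m' \<Longrightarrow> m' \<le> m" for m' unfolding m_def by (rule Greatest_le_nat[of P m' k]) (use Pb in auto)
  obtain B where B: "B \<in> carrier_mat k m" "injm B m" "\<forall>c\<in>carrier_vec m. B *\<^sub>v c \<in> U"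
    using Pm unfolding P_def by auto
  have span: "\<forall>u\<in>U. \<exists>c\<in>carrier_vec m. u = B *\<^sub>v c"
  proof (rule ccontr)
    assume "\<not> ?thesis"
    then obtain u where u: "u \<in> U" and nu: "\<forall>c\<in>carrier_vec m. u \<noteq> B *\<^sub>v c" by auto
    have uc: "u \<in> carrier_vec k" using u Uc by auto
    define B' where "B' = mat k (Suc m) (\<lambda>(i, j). if j < m then B $$ (i, j) else u $ i)"
    have B'c: "B' \<in> carrier_mat k (Suc m)" unfolding B'_def by simp
    have decomp: "B' *\<^sub>v c' = B *\<^sub>v vec m (\<lambda>i. c' $ i) + (c' $ m) \<cdot>\<^sub>v u"
      if c': "c' \<in> carrier_vec (Suc m)" for c'
    proof (rule eq_vecI)
      fix i assume "i < dim_vec (B *\<^sub>v vec m (\<lambda>i. c' $ i) + (c' $ m) \<cdot>\<^sub>v u)"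
      then have i: "i < k" using B uc by simp
      have "(B' *\<^sub>v c') $ i = (\<Sum>j<Suc m. B' $$ (i, j) * c' $ j)" by (rule mv_entry[OF B'c c' i])
      also have "\<dots> = (\<Sum>j<m. B $$ (i, j) * c' $ j) + u $ i * c' $ m"
        using i by (simp add: B'_def)
      also have "(\<Sum>j<m. B $$ (i, j) * c' $ j) = (\<Sum>j<m. B $$ (i, j) * vec m (\<lambda>i. c' $ i) $ j)"
        by (rule sum.cong) auto
      also have "\<dots> = (B *\<^sub>v vec m (\<lambda>i. c' $ i)) $ i" by (rule mv_entry[symmetric]) (use B i in auto)
      finally show "(B' *\<^sub>v c') $ i = (B *\<^sub>v vec m (\<lambda>i. c' $ i) + (c' $ m) \<cdot>\<^sub>v u) $ i"
        using i B uc by (simp add: mult.commute)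
    qed (use B B'c uc in auto)
    have "P (Suc m)" unfolding P_def
    proof (intro exI[of _ B'] conjI B'c)
      show "\<forall>c\<in>carrier_vec (Suc m). B' *\<^sub>v c \<in> U"
      proof
        fix c' :: "complex vec" assume c': "c' \<in> carrier_vec (Suc m)"
        have "B *\<^sub>v vec m (\<lambda>i. c' $ i) \<in> U" using B(3) by auto
        moreover have "(c' $ m) \<cdot>\<^sub>v u \<in> U" using Usm u by auto
        ultimately show "B' *\<^sub>v c' \<in> U" using decomp[OF c'] Uadd by auto
      qed
      show "injm B' (Suc m)" unfolding injm_def
      proof (intro ballI impI)
        fix c' :: "complex vec" assume c': "c' \<in> carrier_vec (Suc m)" and z: "B' *\<^sub>v c' = 0\<^sub>v (dim_row B')"
        define c0 where "c0 = vec m (\<lambda>i. c' $ i)"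
        have z2: "B *\<^sub>v c0 + (c' $ m) \<cdot>\<^sub>v u = 0\<^sub>v k" using z decomp[OF c'] B'c unfolding c0_def by simp
        have t: "c' $ m = 0"
        proof (rule ccontr)
          assume t: "c' $ m \<noteq> 0"
          have "u = B *\<^sub>v ((- 1 / c' $ m) \<cdot>\<^sub>v c0)"
          proof (rule eq_vecI)
            fix i assume "i < dim_vec (B *\<^sub>v ((- 1 / c' $ m) \<cdot>\<^sub>v c0))"
            then have i: "i < k" using B by simp
            have "(B *\<^sub>v c0 + (c' $ m) \<cdot>\<^sub>v u) $ i = 0" using z2 i by simp
            then have e: "(B *\<^sub>v c0) $ i + c' $ m * u $ i = 0" using i B uc unfolding c0_def by simp
            have "B *\<^sub>v ((- 1 / c' $ m) \<cdot>\<^sub>v c0) = (- 1 / c' $ m) \<cdot>\<^sub>v (B *\<^sub>v c0)"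
              by (rule mult_mat_vec[OF B(1)]) (simp add: c0_def)
            then have "(B *\<^sub>v ((- 1 / c' $ m) \<cdot>\<^sub>v c0)) $ i = (- 1 / c' $ m) * (B *\<^sub>v c0) $ i"
              using i B by simp
            moreover have e2: "c' $ m * u $ i = - ((B *\<^sub>v c0) $ i)"
              using e add_eq_0_iff[of "(B *\<^sub>v c0) $ i" "c' $ m * u $ i"] by simp
            moreover have "u $ i = (- 1 / c' $ m) * (B *\<^sub>v c0) $ i"
              using e2 t by (simp add: field_simps)
            ultimately show "u $ i = (B *\<^sub>v ((- 1 / c' $ m) \<cdot>\<^sub>v c0)) $ i" by simp
          qed (use B uc in auto)
          moreover have "(- 1 / c' $ m) \<cdot>\<^sub>v c0 \<in> carrier_vec m" unfolding c0_def by simp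
          ultimately show False using nu by blast
        qed
        have "0 \<cdot>\<^sub>v u = 0\<^sub>v k" by (rule eq_vecI) (use uc in auto)
        then have "B *\<^sub>v c0 = 0\<^sub>v k" using z2 B uc t by (simp add: c0_def)
        then have c00: "c0 = 0\<^sub>v m" using B unfolding injm_def c0_def by auto
        show "c' = 0\<^sub>v (Suc m)"
        proof (rule eq_vecI)
          fix i assume "i < dim_vec (0\<^sub>v (Suc m) :: complex vec)"
          then have "i < Suc m" by simp
          then have "i < m \<or> i = m" by auto
          then show "c' $ i = 0\<^sub>v (Suc m) $ i"
          proof
            assume i: "i < m"
            have "c0 $ i = 0" using c00 i by simp
            then show ?thesis using i unfolding c0_def by simp
          qed (use t in simp)
        qed (use c' in simp)
      qed
    qed
    then show False using mmax by fastforce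
  qed
  show ?thesis using B span by blast
qed

context fgrp
begin

lemma subrep:
  assumes rep: "is_rep G k \<pi>" and inv: "invariant_subspace G k \<pi> U" and ne: "U \<noteq> {0\<^sub>v k}"
  shows "\<exists>m B \<pi>'. 0 < m \<and> m \<le> k \<and> (U \<noteq> carrier_vec k \<longrightarrow> m < k) \<and> B \<in> carrier_mat k m \<and> injm B m \<and>
     (\<forall>c\<in>carrier_vec m. B *\<^sub>v c \<in> U) \<and> is_rep G m \<pi>' \<and> (\<forall>g\<in>carrier G. \<pi> g * B = B * \<pi>' g)"
proof -
  have Uc: "U \<subseteq> carrier_vec k" and U0: "0\<^sub>v k \<in> U" and Uadd: "\<forall>v\<in>U. \<forall>w\<in>U. v + w \<in> U"
    and Usm: "\<forall>a. \<forall>v\<in>U. a \<cdot>\<^sub>v v \<in> U" and Uinv: "\<forall>g\<in>carrier G. \<forall>v\<in>U. \<pi> g *\<^sub>v v \<in> U"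
    using inv unfolding invariant_subspace_def by auto
  obtain m B where B: "B \<in> carrier_mat k m" "injm B m" "\<forall>c\<in>carrier_vec m. B *\<^sub>v c \<in> U"
    "\<forall>u\<in>U. \<exists>c\<in>carrier_vec m. u = B *\<^sub>v c"
    using subspace_basis[OF Uc U0 Uadd Usm] by auto
  have mpos: "0 < m"
  proof (rule ccontr)
    assume "\<not> 0 < m"
    then have m0: "m = 0" by simp
    have "U \<subseteq> {0\<^sub>v k}"
    proof
      fix u assume "u \<in> U"
      then obtain c where c: "c \<in> carrier_vec m" "u = B *\<^sub>v c" using B(4) by auto
      have "B *\<^sub>v c = 0\<^sub>v k" by (rule eq_vecI) (use B m0 c in \<open>auto simp: scalar_prod_def\<close>)
      then show "u \<in> {0\<^sub>v k}" using c by simp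
    qed
    then show False using ne U0 by auto
  qed
  have mk: "m \<le> k" using inj_le[OF B(1,2)] .
  have mlt: "U \<noteq> carrier_vec k \<longrightarrow> m < k"
  proof (intro impI, rule ccontr)
    assume nU: "U \<noteq> carrier_vec k" and "\<not> m < k"
    then have mk': "m = k" using mk by simp
    obtain B' where B': "B' \<in> carrier_mat k k" "B * B' = 1\<^sub>m k" "B' * B = 1\<^sub>m k"
      using square_inj_inverse[of B k] B mk' by auto
    have "carrier_vec k \<subseteq> U"
    proof
      fix v :: "complex vec" assume v: "v \<in> carrier_vec k"
      have "v = (B * B') *\<^sub>v v" using B' v by simp
      also have "\<dots> = B *\<^sub>v (B' *\<^sub>v v)" by (rule assoc_mult_mat_vec) (use B B' v mk' in auto)
      finally show "v \<in> U" using B(3) B' v mk' by (metis mult_mat_vec_carrier)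
    qed
    then show False using nU Uc by auto
  qed
  define coef where "coef g j = (SOME c. c \<in> carrier_vec m \<and> \<pi> g *\<^sub>v col B j = B *\<^sub>v c)" for g j
  have coef: "coef g j \<in> carrier_vec m \<and> \<pi> g *\<^sub>v col B j = B *\<^sub>v coef g j"
    if g: "g \<in> carrier G" and j: "j < m" for g j
  proof -
    have "col B j = B *\<^sub>v unit_vec m j"
    proof (rule eq_vecI)
      fix i assume "i < dim_vec (B *\<^sub>v unit_vec m j)"
      then have i: "i < k" using B by simp
      show "col B j $ i = (B *\<^sub>v unit_vec m j) $ i" using mv_unit[OF B(1) i j] i j B by simp
    qed (use B in simp)
    then have "col B j \<in> U" using B(3) j by simp
    then have "\<pi> g *\<^sub>v col B j \<in> U" using Uinv g by auto
    then have "\<exists>c. c \<in> carrier_vec m \<and> \<pi> g *\<^sub>v col B j = B *\<^sub>v c" using B(4) by auto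
    then show ?thesis unfolding coef_def by (rule someI_ex)
  qed
  define \<pi>' where "\<pi>' g = mat m m (\<lambda>(i, j). coef g j $ i)" for g
  have \<pi>'c: "\<pi>' g \<in> carrier_mat m m" for g unfolding \<pi>'_def by simp
  have inter: "\<pi> g * B = B * \<pi>' g" if g: "g \<in> carrier G" for g
  proof (rule mat_col_eq[of _ k m])
    show "\<pi> g * B \<in> carrier_mat k m" using rep_carrier[OF rep g] B by simp
    show "B * \<pi>' g \<in> carrier_mat k m" using \<pi>'c B by simp
    fix j assume j: "j < m"
    have "col (\<pi> g * B) j = \<pi> g *\<^sub>v col B j" by (rule col_mult2[OF rep_carrier[OF rep g] B(1) j])
    also have "\<dots> = B *\<^sub>v coef g j" using coef[OF g j] by simp
    also have "coef g j = col (\<pi>' g) j"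
      by (rule eq_vecI) (use coef[OF g j] j in \<open>auto simp: \<pi>'_def\<close>)
    also have "B *\<^sub>v col (\<pi>' g) j = col (B * \<pi>' g) j" using col_mult2[OF B(1) \<pi>'c j] by simp
    finally show "col (\<pi> g * B) j = col (B * \<pi>' g) j" .
  qed
  have rep': "is_rep G m \<pi>'" unfolding is_rep_def
  proof (intro conjI ballI)
    show "\<pi>' g \<in> carrier_mat m m" for g by (rule \<pi>'c)
    fix g h assume g: "g \<in> carrier G" and h: "h \<in> carrier G"
    have pg: "\<pi> g \<in> carrier_mat k k" and ph: "\<pi> h \<in> carrier_mat k k" using rep_carrier rep g h by auto
    have "B * \<pi>' (g \<otimes> h) = \<pi> (g \<otimes> h) * B" using inter g h by simp
    also have "\<dots> = \<pi> g * \<pi> h * B" using rep_mult[OF rep g h] by simp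
    also have "\<dots> = \<pi> g * (\<pi> h * B)" using pg ph B by simp
    also have "\<dots> = \<pi> g * (B * \<pi>' h)" using inter h by simp
    also have "\<dots> = (\<pi> g * B) * \<pi>' h" using assoc_mult_mat[OF pg B(1) \<pi>'c[of h]] by simp
    also have "\<dots> = (B * \<pi>' g) * \<pi>' h" using inter g by simp
    also have "\<dots> = B * (\<pi>' g * \<pi>' h)" using assoc_mult_mat[OF B(1) \<pi>'c[of g] \<pi>'c[of h]] by simp
    finally have eq: "B * \<pi>' (g \<otimes> h) = B * (\<pi>' g * \<pi>' h)" .
    show "\<pi>' (g \<otimes> h) = \<pi>' g * \<pi>' h"
      by (rule injm_cancel[OF B(1,2) \<pi>'c _ eq]) (rule mult_carrier_mat[OF \<pi>'c \<pi>'c])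
  next
    have "B * \<pi>' \<one> = \<pi> \<one> * B" using inter by simp
    also have "\<dots> = B" using rep_one[OF rep] B by simp
    also have "\<dots> = B * 1\<^sub>m m" using B by simp
    finally have eq: "B * \<pi>' \<one> = B * 1\<^sub>m m" .
    show "\<pi>' \<one> = 1\<^sub>m m" by (rule injm_cancel[OF B(1,2) \<pi>'c _ eq]) simp
  qed
  show ?thesis using mpos mk mlt B rep' inter by blast
qed

lemma irr_subrep:
  assumes "is_rep G k \<pi>" "0 < k"
  shows "\<exists>m \<rho> B. irreducible_rep G m \<rho> \<and> B \<in> carrier_mat k m \<and> injm B m \<and> (\<forall>g\<in>carrier G. \<pi> g * B = B * \<rho> g)"
  using assms
proof (induction k arbitrary: \<pi> rule: less_induct)
  case (less k)
  show ?case
  proof (cases "irreducible_rep G k \<pi>")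
    case True
    have "injm (1\<^sub>m k) k" unfolding injm_def by auto
    moreover have "\<forall>g\<in>carrier G. \<pi> g * 1\<^sub>m k = 1\<^sub>m k * \<pi> g"
    proof
      fix g assume "g \<in> carrier G"
      then have "\<pi> g \<in> carrier_mat k k" using rep_carrier[OF less.prems(1)] by simp
      then show "\<pi> g * 1\<^sub>m k = 1\<^sub>m k * \<pi> g" by simp
    qed
    ultimately show ?thesis using True rep_carrier[OF less.prems(1)]
      by (intro exI[of _ k] exI[of _ \<pi>] exI[of _ "1\<^sub>m k"]) auto
  next
    case False
    then obtain W where W: "invariant_subspace G k \<pi> W" "W \<noteq> {0\<^sub>v k}" "W \<noteq> carrier_vec k"
      using less.prems unfolding irreducible_rep_def by auto
    obtain m B \<pi>' where sr: "0 < m" "m < k" "B \<in> carrier_mat k m" "injm B m"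
      "is_rep G m \<pi>'" "\<forall>g\<in>carrier G. \<pi> g * B = B * \<pi>' g"
      using subrep[OF less.prems(1) W(1,2)] W(3) by blast
    obtain m2 \<rho> B2 where ih: "irreducible_rep G m2 \<rho>" "B2 \<in> carrier_mat m m2" "injm B2 m2"
      "\<forall>g\<in>carrier G. \<pi>' g * B2 = B2 * \<rho> g"
      using less.IH[OF sr(2) sr(5) sr(1)] by blast
    have "\<forall>g\<in>carrier G. \<pi> g * (B * B2) = (B * B2) * \<rho> g"
    proof
      fix g assume g: "g \<in> carrier G"
      have pg: "\<pi> g \<in> carrier_mat k k" using rep_carrier[OF less.prems(1) g] .
      have p'g: "\<pi>' g \<in> carrier_mat m m" using rep_carrier[OF sr(5) g] .
      have rg: "\<rho> g \<in> carrier_mat m2 m2" using rep_carrier[OF irr_rep[OF ih(1)] g] .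
      have "\<pi> g * (B * B2) = (\<pi> g * B) * B2" using pg sr(3) ih(2) by simp
      also have "\<dots> = B * \<pi>' g * B2" using sr(6) g by simp
      also have "\<dots> = B * (\<pi>' g * B2)" using sr(3) p'g ih(2) by simp
      also have "\<dots> = B * (B2 * \<rho> g)" using ih(4) g by simp
      also have "\<dots> = (B * B2) * \<rho> g" using sr(3) ih(2) rg by simp
      finally show "\<pi> g * (B * B2) = (B * B2) * \<rho> g" .
    qed
    then show ?thesis using ih injm_mult[OF sr(3,4) ih(2,3)] sr(3)
      by (intro exI[of _ m2] exI[of _ \<rho>] exI[of _ "B * B2"]) auto
  qed
qed

end


locale irrsys = fgrp G for G (structure) +
  fixes reps :: "(nat \<times> ('a \<Rightarrow> complex mat)) list"
  assumes irr: "complete_irreps G reps"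
begin

definition nn :: nat where "nn = card (carrier G)"
definition vs :: "'a list" where "vs = enum_carrier G"
definition dd :: "nat \<Rightarrow> nat" where "dd i = fst (reps ! i)"
definition rr :: "nat \<Rightarrow> 'a \<Rightarrow> complex mat" where "rr i = snd (reps ! i)"
definition idx :: "'a \<Rightarrow> nat" where "idx g = (SOME x. x < nn \<and> vs ! x = g)"
definition II :: "(nat \<times> nat \<times> nat) set" where "II = rep_index reps"

lemma vs_prop: "distinct vs" "set vs = carrier G" "length vs = nn"
proof -
  have "\<exists>xs. distinct xs \<and> set xs = carrier G" using finite_distinct_list[OF fin] by auto
  then have "distinct vs \<and> set vs = carrier G" unfolding vs_def enum_carrier_def by (rule someI_ex)
  then show "distinct vs" "set vs = carrier G" "length vs = nn"
    using distinct_card[of vs] unfolding nn_def by auto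
qed

lemma nn_pos: "0 < nn"
  unfolding nn_def using fin one_closed card_gt_0_iff by blast

lemma vs_in: "x < nn \<Longrightarrow> vs ! x \<in> carrier G"
  using vs_prop nth_mem by metis

lemma idx_prop: assumes "g \<in> carrier G" shows "idx g < nn" "vs ! idx g = g"
proof -
  have "\<exists>x. x < nn \<and> vs ! x = g" using assms vs_prop by (metis in_set_conv_nth)
  then have "idx g < nn \<and> vs ! idx g = g" unfolding idx_def by (rule someI_ex)
  then show "idx g < nn" "vs ! idx g = g" by auto
qed

lemma idx_nth: "x < nn \<Longrightarrow> idx (vs ! x) = x"
  using idx_prop[OF vs_in] vs_prop nth_eq_iff_index_eq by metis

lemma vs_eq_iff: "x < nn \<Longrightarrow> y < nn \<Longrightarrow> vs ! x = vs ! y \<longleftrightarrow> x = y"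
  using vs_prop nth_eq_iff_index_eq by metis

lemma sum_idx: "(\<Sum>x<nn. H x) = (\<Sum>g\<in>carrier G. H (idx g))"
  by (rule sum.reindex_bij_witness[of _ idx "\<lambda>x. vs ! x"]) (auto simp: idx_prop idx_nth vs_in)

lemma sum_vs: "(\<Sum>x<nn. F (vs ! x)) = (\<Sum>g\<in>carrier G. F g)"
  using sum_idx[of "\<lambda>x. F (vs ! x)"] by (simp add: idx_prop)

lemma irr_i: "i < length reps \<Longrightarrow> irreducible_rep G (dd i) (rr i)"
  using irr unfolding complete_irreps_def dd_def rr_def by auto
lemma rep_i: "i < length reps \<Longrightarrow> is_rep G (dd i) (rr i)"
  using irr_i irr_rep by auto
lemma dd_pos: "i < length reps \<Longrightarrow> 0 < dd i"
  using irr_i irr_pos by auto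
lemma noneq_i: "i < length reps \<Longrightarrow> j < length reps \<Longrightarrow> i \<noteq> j \<Longrightarrow> \<not> equiv_rep G (dd i) (rr i) (dd j) (rr j)"
  using irr unfolding complete_irreps_def dd_def rr_def by auto

lemma II_iff: "(i, a, b) \<in> II \<longleftrightarrow> i < length reps \<and> a < dd i \<and> b < dd i"
  unfolding II_def rep_index_def dd_def by auto

lemma finite_II: "finite II"
proof -
  have "II \<subseteq> {..<length reps} \<times> {..<Max (insert 0 (dd ` {..<length reps}))} \<times> {..<Max (insert 0 (dd ` {..<length reps}))}"
  proof
    fix t assume "t \<in> II"
    then obtain i a b where t: "t = (i, a, b)" "i < length reps" "a < dd i" "b < dd i"
      using II_iff by (cases t) auto
    have "dd i \<le> Max (insert 0 (dd ` {..<length reps}))" using t by (intro Max_ge) auto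
    then have "a < Max (insert 0 (dd ` {..<length reps}))" "b < Max (insert 0 (dd ` {..<length reps}))"
      using t by linarith+
    then show "t \<in> {..<length reps} \<times> {..<Max (insert 0 (dd ` {..<length reps}))} \<times> {..<Max (insert 0 (dd ` {..<length reps}))}"
      using t by auto
  qed
  then show ?thesis by (rule finite_subset) auto
qed

definition MM :: "(nat \<times> nat \<times> nat) list \<Rightarrow> complex mat" where
  "MM ks = mat nn (length ks) (\<lambda>(x, k). case ks ! k of (i, a, b) \<Rightarrow> rr i (vs ! x) $$ (a, b))"
definition MM' :: "(nat \<times> nat \<times> nat) list \<Rightarrow> complex mat" where
  "MM' ks = mat (length ks) nn (\<lambda>(k, x). case ks ! k of (i, a, b) \<Rightarrow>
      of_nat (dd i) / of_nat nn * rr i (inv (vs ! x)) $$ (b, a))"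

lemma MM'_MM:
  assumes ks: "distinct ks" "set ks = II"
  shows "MM' ks * MM ks = 1\<^sub>m (length ks)"
proof (rule eq_matI)
  fix k l assume "k < dim_row (1\<^sub>m (length ks) :: complex mat)" "l < dim_col (1\<^sub>m (length ks) :: complex mat)"
  then have k: "k < length ks" and l: "l < length ks" by auto
  obtain i a b where kk: "ks ! k = (i, a, b)" by (cases "ks ! k") auto
  obtain j c q where ll: "ks ! l = (j, c, q)" by (cases "ks ! l") auto
  have ki: "(i, a, b) \<in> II" using kk k ks nth_mem by metis
  have lj: "(j, c, q) \<in> II" using ll l ks nth_mem by metis
  have i: "i < length reps" "a < dd i" "b < dd i" using ki II_iff by auto
  have j: "j < length reps" "c < dd j" "q < dd j" using lj II_iff by auto
  have "(MM' ks * MM ks) $$ (k, l) = (\<Sum>x<nn. MM' ks $$ (k, x) * MM ks $$ (x, l))"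
    by (rule mult_entry[of _ _ nn]) (use k l in \<open>auto simp: MM_def MM'_def\<close>)
  also have "\<dots> = (\<Sum>x<nn. of_nat (dd i) / of_nat nn * (rr i (inv (vs ! x)) $$ (b, a) * rr j (vs ! x) $$ (c, q)))"
    by (rule sum.cong) (use k l kk ll in \<open>auto simp: MM_def MM'_def\<close>)
  also have "\<dots> = of_nat (dd i) / of_nat nn * (\<Sum>x<nn. rr i (inv (vs ! x)) $$ (b, a) * rr j (vs ! x) $$ (c, q))"
    by (rule sum_distrib_left[symmetric])
  also have "(\<Sum>x<nn. rr i (inv (vs ! x)) $$ (b, a) * rr j (vs ! x) $$ (c, q)) =
      (\<Sum>g\<in>carrier G. rr i (inv g) $$ (b, a) * rr j g $$ (c, q))"
    by (rule sum_vs)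
  also have "of_nat (dd i) / of_nat nn * (\<Sum>g\<in>carrier G. rr i (inv g) $$ (b, a) * rr j g $$ (c, q)) = 1\<^sub>m (length ks) $$ (k, l)"
  proof (cases "i = j")
    case False
    have "(\<Sum>g\<in>carrier G. rr i (inv g) $$ (b, a) * rr j g $$ (c, q)) = 0"
      by (rule orth_ne[OF irr_i[OF j(1)] irr_i[OF i(1)] noneq_i[OF j(1) i(1)]]) (use i j False in auto)
    moreover have "k \<noteq> l" using kk ll False by auto
    ultimately show ?thesis using k l by simp
  next
    case True
    have "(\<Sum>g\<in>carrier G. rr i (inv g) $$ (b, a) * rr j g $$ (c, q)) =
      (if b = q \<and> a = c then of_nat nn / of_nat (dd i) else 0)"
      using orth_eq[OF irr_i[OF i(1)], of b a c q] i j True unfolding nn_def by auto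
    moreover have "k = l \<longleftrightarrow> (b = q \<and> a = c)"
      using kk ll True nth_eq_iff_index_eq[OF ks(1) k l] by auto
    moreover have "of_nat (dd i) \<noteq> (0::complex)" "of_nat nn \<noteq> (0::complex)"
      using dd_pos[OF i(1)] nn_pos by auto
    moreover have "of_nat (dd i) / of_nat nn * (of_nat nn / of_nat (dd i)) = (1::complex)"
      using dd_pos[OF i(1)] nn_pos by simp
    ultimately show ?thesis using k l by auto
  qed
  finally show "(MM' ks * MM ks) $$ (k, l) = 1\<^sub>m (length ks) $$ (k, l)" .
qed (auto simp: MM_def MM'_def)

end


context irrsys
begin

definition reg :: "'a \<Rightarrow> complex mat" where
  "reg g = mat nn nn (\<lambda>(x, y). if vs ! y = vs ! x \<otimes> g then 1 else 0)"

lemma reg_carrier[simp]: "reg g \<in> carrier_mat nn nn" unfolding reg_def by simp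
lemma reg_dims[simp]: "dim_row (reg g) = nn" "dim_col (reg g) = nn" unfolding reg_def by simp_all

lemma sum_delta_idx:
  fixes H :: "nat \<Rightarrow> complex"
  assumes X: "X \<in> carrier G"
  shows "(\<Sum>y<nn. (if vs ! y = X then 1 else 0) * H y) = H (idx X)"
proof -
  have "(\<Sum>y<nn. (if vs ! y = X then 1 else 0) * H y) = (\<Sum>w\<in>carrier G. (if vs ! idx w = X then 1 else 0) * H (idx w))"
    by (rule sum_idx)
  also have "\<dots> = (\<Sum>w\<in>carrier G. if w = X then H (idx w) else 0)"
    by (rule sum.cong) (auto simp: idx_prop)
  also have "\<dots> = H (idx X)" using X fin by simp
  finally show ?thesis .
qed

lemma reg_mv:
  assumes f: "f \<in> carrier_vec nn" and g: "g \<in> carrier G" and x: "x < nn"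
  shows "(reg g *\<^sub>v f) $ x = f $ idx (vs ! x \<otimes> g)"
proof -
  have "(reg g *\<^sub>v f) $ x = (\<Sum>y<nn. reg g $$ (x, y) * f $ y)" by (rule mv_entry[OF reg_carrier f x])
  also have "\<dots> = (\<Sum>y<nn. (if vs ! y = vs ! x \<otimes> g then 1 else 0) * f $ y)"
    by (rule sum.cong) (use x in \<open>auto simp: reg_def\<close>)
  also have "\<dots> = f $ idx (vs ! x \<otimes> g)" by (rule sum_delta_idx) (use g x vs_in in auto)
  finally show ?thesis .
qed

lemma reg_mult_entry:
  assumes B: "B \<in> carrier_mat nn m" and g: "g \<in> carrier G" and x: "x < nn" and q: "q < m"
  shows "(reg g * B) $$ (x, q) = B $$ (idx (vs ! x \<otimes> g), q)"
proof -
  have "(reg g * B) $$ (x, q) = col (reg g * B) q $ x" using B x q by simp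
  also have "\<dots> = (reg g *\<^sub>v col B q) $ x" using col_mult2[OF reg_carrier B q] by simp
  also have "\<dots> = col B q $ idx (vs ! x \<otimes> g)" by (rule reg_mv) (use B q g x in auto)
  also have "\<dots> = B $$ (idx (vs ! x \<otimes> g), q)" using B q idx_prop[of "vs ! x \<otimes> g"] g x vs_in by simp
  finally show ?thesis .
qed

lemma reg_rep: "is_rep G nn reg"
  unfolding is_rep_def
proof (intro conjI ballI)
  show "reg g \<in> carrier_mat nn nn" for g by (rule reg_carrier)
  fix g h assume g: "g \<in> carrier G" and h: "h \<in> carrier G"
  show "reg (g \<otimes> h) = reg g * reg h"
  proof (rule eq_matI)
    fix x y assume "x < dim_row (reg g * reg h)" "y < dim_col (reg g * reg h)"
    then have x: "x < nn" and y: "y < nn" using reg_carrier by auto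
    have "(reg g * reg h) $$ (x, y) = reg h $$ (idx (vs ! x \<otimes> g), y)"
      by (rule reg_mult_entry[OF reg_carrier g x y])
    also have "\<dots> = (if vs ! y = vs ! x \<otimes> g \<otimes> h then 1 else 0)"
      using idx_prop[of "vs ! x \<otimes> g"] vs_in[OF x] g y unfolding reg_def by simp
    also have "\<dots> = reg (g \<otimes> h) $$ (x, y)" using x y vs_in[OF x] g h by (simp add: reg_def m_assoc)
    finally show "reg (g \<otimes> h) $$ (x, y) = (reg g * reg h) $$ (x, y)" by simp
  qed (auto simp: reg_def)
next
  show "reg \<one> = 1\<^sub>m nn"
    by (rule eq_matI) (auto simp: reg_def vs_in vs_eq_iff)
qed

definition cf :: "complex vec \<Rightarrow> nat \<Rightarrow> nat \<Rightarrow> nat \<Rightarrow> complex" where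
  "cf f i a b = (\<Sum>x<nn. rr i (inv (vs ! x)) $$ (b, a) * f $ x)"

lemma cf_reg:
  assumes f: "f \<in> carrier_vec nn" and g: "g \<in> carrier G" and i: "i < length reps" and b: "b < dd i" and a: "a < dd i"
  shows "cf (reg g *\<^sub>v f) i a b = (\<Sum>r<dd i. rr i g $$ (b, r) * cf f i a r)"
proof -
  let ?\<rho> = "rr i"
  have rep: "is_rep G (dd i) ?\<rho>" using rep_i[OF i] .
  have "cf (reg g *\<^sub>v f) i a b = (\<Sum>x<nn. ?\<rho> (inv (vs ! x)) $$ (b, a) * f $ idx (vs ! x \<otimes> g))"
    unfolding cf_def by (rule sum.cong) (use reg_mv[OF f g] in auto)
  also have "\<dots> = (\<Sum>w\<in>carrier G. ?\<rho> (inv w) $$ (b, a) * f $ idx (w \<otimes> g))"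
    by (rule sum_vs)
  also have "\<dots> = (\<Sum>w\<in>carrier G. ?\<rho> (inv (w \<otimes> inv g)) $$ (b, a) * f $ idx w)"
  proof -
    have "(\<Sum>w\<in>carrier G. ?\<rho> (inv (w \<otimes> inv g)) $$ (b, a) * f $ idx w) =
          (\<Sum>w\<in>carrier G. ?\<rho> (inv ((w \<otimes> g) \<otimes> inv g)) $$ (b, a) * f $ idx (w \<otimes> g))"
      by (rule sum_right[OF g, symmetric])
    also have "\<dots> = (\<Sum>w\<in>carrier G. ?\<rho> (inv w) $$ (b, a) * f $ idx (w \<otimes> g))"
      by (rule sum.cong) (use g in \<open>auto simp: m_assoc\<close>)
    finally show ?thesis by simp
  qed
  also have "\<dots> = (\<Sum>w\<in>carrier G. (\<Sum>r<dd i. ?\<rho> g $$ (b, r) * ?\<rho> (inv w) $$ (r, a)) * f $ idx w)"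
  proof (rule sum.cong)
    fix w assume w: "w \<in> carrier G"
    have "inv (w \<otimes> inv g) = g \<otimes> inv w" using w g by (simp add: inv_mult_group)
    then have "?\<rho> (inv (w \<otimes> inv g)) = ?\<rho> g * ?\<rho> (inv w)" using rep_mult[OF rep g] w by simp
    moreover have "(?\<rho> g * ?\<rho> (inv w)) $$ (b, a) = (\<Sum>r<dd i. ?\<rho> g $$ (b, r) * ?\<rho> (inv w) $$ (r, a))"
      by (rule mult_entry) (use rep_carrier[OF rep] g w a b in auto)
    ultimately show "?\<rho> (inv (w \<otimes> inv g)) $$ (b, a) * f $ idx w =
      (\<Sum>r<dd i. ?\<rho> g $$ (b, r) * ?\<rho> (inv w) $$ (r, a)) * f $ idx w" by simp
  qed simp
  also have "\<dots> = (\<Sum>r<dd i. ?\<rho> g $$ (b, r) * (\<Sum>w\<in>carrier G. ?\<rho> (inv w) $$ (r, a) * f $ idx w))"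
    by (rule swap_helper2[symmetric])
  also have "\<dots> = (\<Sum>r<dd i. ?\<rho> g $$ (b, r) * cf f i a r)"
  proof (rule sum.cong)
    fix r
    have "cf f i a r = (\<Sum>w\<in>carrier G. ?\<rho> (inv (vs ! idx w)) $$ (r, a) * f $ idx w)"
      unfolding cf_def by (rule sum_idx)
    also have "\<dots> = (\<Sum>w\<in>carrier G. ?\<rho> (inv w) $$ (r, a) * f $ idx w)"
      by (rule sum.cong) (auto simp: idx_prop)
    finally show "?\<rho> g $$ (b, r) * (\<Sum>w\<in>carrier G. ?\<rho> (inv w) $$ (r, a) * f $ idx w) = ?\<rho> g $$ (b, r) * cf f i a r"
      by simp
  qed simp
  finally show ?thesis .
qed

definition WW :: "complex vec set" where
  "WW = {f \<in> carrier_vec nn. \<forall>i<length reps. \<forall>a<dd i. \<forall>b<dd i. cf f i a b = 0}"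

lemma WW_inv: "invariant_subspace G nn reg WW"
  unfolding invariant_subspace_def
proof (intro conjI ballI allI)
  show "WW \<subseteq> carrier_vec nn" unfolding WW_def by auto
  show "0\<^sub>v nn \<in> WW" unfolding WW_def cf_def by auto
next
  fix v w assume v: "v \<in> WW" and w: "w \<in> WW"
  have "cf (v + w) i a b = cf v i a b + cf w i a b" for i a b
    unfolding cf_def using v w unfolding WW_def by (auto simp: sum.distrib algebra_simps)
  then show "v + w \<in> WW" using v w unfolding WW_def by auto
next
  fix c v assume v: "v \<in> WW"
  have "cf (c \<cdot>\<^sub>v v) i a b = c * cf v i a b" for i a b
    unfolding cf_def using v unfolding WW_def by (auto simp: sum_distrib_left algebra_simps)
  then show "c \<cdot>\<^sub>v v \<in> WW" using v unfolding WW_def by auto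
next
  fix g v assume g: "g \<in> carrier G" and v: "v \<in> WW"
  have vc: "v \<in> carrier_vec nn" using v unfolding WW_def by auto
  show "reg g *\<^sub>v v \<in> WW" unfolding WW_def
  proof (intro CollectI conjI allI impI)
    show "reg g *\<^sub>v v \<in> carrier_vec nn" using mult_mat_vec_carrier[OF reg_carrier vc] .
    fix i a b assume i: "i < length reps" and a: "a < dd i" and b: "b < dd i"
    show "cf (reg g *\<^sub>v v) i a b = 0" using cf_reg[OF vc g i b a] v i a unfolding WW_def by simp
  qed
qed

end


context irrsys
begin

lemma WW_zero: "WW = {0\<^sub>v nn}"
proof (rule ccontr)
  assume ne: "WW \<noteq> {0\<^sub>v nn}"
  obtain m B \<pi>' where sr: "0 < m" "B \<in> carrier_mat nn m" "injm B m"
    "\<forall>c\<in>carrier_vec m. B *\<^sub>v c \<in> WW" "is_rep G m \<pi>'" "\<forall>g\<in>carrier G. reg g * B = B * \<pi>' g"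
    using subrep[OF reg_rep WW_inv ne] by blast
  obtain m2 \<rho> B2 where ir: "irreducible_rep G m2 \<rho>" "B2 \<in> carrier_mat m m2" "injm B2 m2"
    "\<forall>g\<in>carrier G. \<pi>' g * B2 = B2 * \<rho> g"
    using irr_subrep[OF sr(5) sr(1)] by blast
  obtain i where i: "i < length reps" "equiv_rep G m2 \<rho> (dd i) (rr i)"
    using irr ir(1) unfolding complete_irreps_def dd_def rr_def by blast
  have m2: "m2 = dd i" using i(2) unfolding equiv_rep_def by simp
  obtain P where P: "P \<in> carrier_mat m2 m2" "invertible_mat P" "\<forall>g\<in>carrier G. P * \<rho> g = rr i g * P"
    using i(2) unfolding equiv_rep_def by blast
  obtain Q where Q0: "P * Q = 1\<^sub>m m2" "Q * P = 1\<^sub>m (dim_row Q)"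
    using P(1,2) unfolding invertible_mat_def inverts_mat_def by auto
  have Qc: "Q \<in> carrier_mat m2 m2"
  proof -
    have "dim_col Q = m2" using Q0(1) P(1) by (metis index_mult_mat(3) index_one_mat(3))
    moreover have "dim_row Q = m2" using Q0(2) P(1) by (metis carrier_matD(2) index_mult_mat(3) index_one_mat(3))
    ultimately show ?thesis by auto
  qed
  have QP: "Q * P = 1\<^sub>m m2" using Q0(2) Qc by simp
  define d where "d = dd i"
  have d: "0 < d" using dd_pos[OF i(1)] unfolding d_def .
  have rep: "is_rep G d (rr i)" using rep_i[OF i(1)] unfolding d_def .
  define B3 where "B3 = B * B2 * Q"
  have B3c: "B3 \<in> carrier_mat nn d" unfolding B3_def using sr(2) ir(2) Qc m2 d_def by auto
  have injB2: "injm (B * B2) m2" by (rule injm_mult[OF sr(2,3) ir(2,3)])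
  have "injm (B * B2 * Q) m2"
    by (rule injm_invertible[OF _ injB2 Qc P(1) QP]) (use sr(2) ir(2) in auto)
  then have injB3: "injm B3 d" unfolding B3_def using m2 d_def by simp
  have inter: "reg g * B3 = B3 * rr i g" if g: "g \<in> carrier G" for g
  proof -
    have rg: "\<rho> g \<in> carrier_mat m2 m2" using rep_carrier[OF irr_rep[OF ir(1)] g] .
    have rig: "rr i g \<in> carrier_mat m2 m2" using rep_carrier[OF rep g] m2 d_def by simp
    have pg: "\<pi>' g \<in> carrier_mat m m" using rep_carrier[OF sr(5) g] .
    have key: "\<rho> g * Q = Q * rr i g"
    proof -
      have "\<rho> g * Q = (Q * P) * \<rho> g * Q" using QP rg by simp
      also have "\<dots> = Q * (P * \<rho> g) * Q" using Qc P(1) rg by (simp add: assoc_mult_mat)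
      also have "\<dots> = Q * (rr i g * P) * Q" using P(3) g by simp
      also have "\<dots> = Q * rr i g * (P * Q)"
        by (simp add: assoc_mult_mat[OF Qc rig P(1), symmetric] assoc_mult_mat[OF mult_carrier_mat[OF Qc rig] P(1) Qc])
      also have "\<dots> = Q * rr i g" using Q0(1) Qc rig by simp
      finally show ?thesis .
    qed
    have B3e: "B3 = B * (B2 * Q)" unfolding B3_def by (rule assoc_mult_mat[OF sr(2) ir(2) Qc])
    have c1: "B2 * Q \<in> carrier_mat m m2" using ir(2) Qc by simp
    have "reg g * B3 = (reg g * B) * (B2 * Q)" unfolding B3e by (rule assoc_mult_mat[symmetric, OF reg_carrier sr(2) c1])
    also have "\<dots> = (B * \<pi>' g) * (B2 * Q)" using sr(6) g by simp
    also have "\<dots> = B * (\<pi>' g * (B2 * Q))" by (rule assoc_mult_mat[OF sr(2) pg c1])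
    also have "\<pi>' g * (B2 * Q) = (\<pi>' g * B2) * Q" by (rule assoc_mult_mat[symmetric, OF pg ir(2) Qc])
    also have "\<dots> = (B2 * \<rho> g) * Q" using ir(4) g by simp
    also have "\<dots> = B2 * (\<rho> g * Q)" by (rule assoc_mult_mat[OF ir(2) rg Qc])
    also have "\<dots> = B2 * (Q * rr i g)" using key by simp
    also have "\<dots> = (B2 * Q) * rr i g" by (rule assoc_mult_mat[symmetric, OF ir(2) Qc rig])
    also have "B * ((B2 * Q) * rr i g) = (B * (B2 * Q)) * rr i g" by (rule assoc_mult_mat[symmetric, OF sr(2) c1 rig])
    also have "\<dots> = B3 * rr i g" using B3e by simp
    finally show ?thesis .
  qed
  have B3W: "B3 *\<^sub>v c \<in> WW" if c: "c \<in> carrier_vec d" for c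
  proof -
    have cc: "c \<in> carrier_vec m2" using c m2 d_def by simp
    have c1: "B2 * Q \<in> carrier_mat m m2" using ir(2) Qc by simp
    have "B3 *\<^sub>v c = (B * (B2 * Q)) *\<^sub>v c" unfolding B3_def using assoc_mult_mat[OF sr(2) ir(2) Qc] by simp
    also have "\<dots> = B *\<^sub>v ((B2 * Q) *\<^sub>v c)" by (rule assoc_mult_mat_vec[OF sr(2) c1 cc])
    also have "(B2 * Q) *\<^sub>v c = B2 *\<^sub>v (Q *\<^sub>v c)" by (rule assoc_mult_mat_vec[OF ir(2) Qc cc])
    finally have "B3 *\<^sub>v c = B *\<^sub>v (B2 *\<^sub>v (Q *\<^sub>v c))" .
    then show ?thesis using sr(4) ir(2) Qc c m2 d_def by simp
  qed
  define x1 where "x1 = idx \<one>"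
  have x1: "x1 < nn" "vs ! x1 = \<one>" unfolding x1_def using idx_prop by auto
  define c where "c r = B3 $$ (x1, r)" for r
  have expand: "B3 $$ (y, q) = (\<Sum>r<d. c r * rr i (vs ! y) $$ (r, q))" if y: "y < nn" and q: "q < d" for y q
  proof -
    have g: "vs ! y \<in> carrier G" using vs_in[OF y] .
    have "B3 $$ (y, q) = (reg (vs ! y) * B3) $$ (x1, q)"
      using reg_mult_entry[OF B3c g x1(1) q] x1 g idx_nth[OF y] by simp
    also have "\<dots> = (B3 * rr i (vs ! y)) $$ (x1, q)" using inter[OF g] by simp
    also have "\<dots> = (\<Sum>r<d. B3 $$ (x1, r) * rr i (vs ! y) $$ (r, q))"
      by (rule mult_entry[OF B3c rep_carrier[OF rep g] x1(1) q])
    finally show ?thesis unfolding c_def .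
  qed
  have c0: "c a = 0" if a: "a < d" for a
  proof -
    have q: "0 < d" using d .
    define q where "q = (0::nat)"
    have qd: "q < d" using d unfolding q_def by simp
    have colW: "col B3 q \<in> WW"
    proof -
      have "col B3 q = B3 *\<^sub>v unit_vec d q"
        by (rule eq_vecI) (use B3c qd mv_unit[OF B3c _ qd] in auto)
      then show ?thesis using B3W[of "unit_vec d q"] by simp
    qed
    have "cf (col B3 q) i a q = 0" using colW i(1) a qd unfolding WW_def d_def by auto
    moreover have "cf (col B3 q) i a q = c a * (of_nat nn / of_nat d)"
    proof -
      have "cf (col B3 q) i a q = (\<Sum>x<nn. rr i (inv (vs ! x)) $$ (q, a) * (\<Sum>r<d. c r * rr i (vs ! x) $$ (r, q)))"
        unfolding cf_def by (rule sum.cong) (use B3c qd expand in auto)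
      also have "\<dots> = (\<Sum>r<d. c r * (\<Sum>x<nn. rr i (inv (vs ! x)) $$ (q, a) * rr i (vs ! x) $$ (r, q)))"
        by (simp add: sum_distrib_left sum_distrib_right algebra_simps sum.swap[of _ "{..<nn}"])
      also have "\<dots> = (\<Sum>r<d. c r * (if a = r then of_nat nn / of_nat d else 0))"
      proof (rule sum.cong)
        fix r assume r: "r \<in> {..<d}"
        have "(\<Sum>x<nn. rr i (inv (vs ! x)) $$ (q, a) * rr i (vs ! x) $$ (r, q)) =
              (\<Sum>g\<in>carrier G. rr i (inv g) $$ (q, a) * rr i g $$ (r, q))" by (rule sum_vs)
        also have "\<dots> = (if a = r then of_nat nn / of_nat d else 0)"
          using orth_eq[OF irr_i[OF i(1)], of q a r q] qd a r unfolding d_def nn_def by auto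
        finally show "c r * (\<Sum>x<nn. rr i (inv (vs ! x)) $$ (q, a) * rr i (vs ! x) $$ (r, q)) =
          c r * (if a = r then of_nat nn / of_nat d else 0)" by simp
      qed simp
      also have "\<dots> = c a * (of_nat nn / of_nat d)"
        using a by (simp add: if_distrib[of "\<lambda>t. c _ * t"] cong: if_cong)
      finally show ?thesis .
    qed
    ultimately show "c a = 0" using nn_pos d by simp
  qed
  have "B3 *\<^sub>v unit_vec d 0 = 0\<^sub>v nn"
  proof (rule eq_vecI)
    fix y assume "y < dim_vec (0\<^sub>v nn :: complex vec)"
    then have y: "y < nn" by simp
    have "(B3 *\<^sub>v unit_vec d 0) $ y = B3 $$ (y, 0)" using mv_unit[OF B3c y d] .
    also have "\<dots> = 0" using expand[OF y d] c0 by simp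
    finally show "(B3 *\<^sub>v unit_vec d 0) $ y = 0\<^sub>v nn $ y" using y by simp
  qed (use B3c in simp)
  moreover have "unit_vec d 0 \<noteq> (0\<^sub>v d :: complex vec)"
  proof
    assume "unit_vec d 0 = (0\<^sub>v d :: complex vec)"
    then have "unit_vec d 0 $ 0 = (0\<^sub>v d :: complex vec) $ 0" by simp
    then show False using d by simp
  qed
  ultimately show False using injB3 B3c unfolding injm_def by auto
qed

end


lemma sum_split_nat:
  fixes F :: "nat \<Rightarrow> 'b :: comm_monoid_add"
  assumes "m \<le> n"
  shows "(\<Sum>r<n. F r) = (\<Sum>r<m. F r) + (\<Sum>r<n - m. F (r + m))"
proof -
  have e: "{..<n} = {..<m} \<union> {m..<n}" using assms by auto
  have "(\<Sum>r<n. F r) = (\<Sum>r<m. F r) + (\<Sum>r\<in>{m..<n}. F r)"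
    by (subst e, rule sum.union_disjoint) auto
  also have "(\<Sum>r\<in>{m..<n}. F r) = (\<Sum>r<n - m. F (r + m))"
  proof -
    have "(\<Sum>r\<in>{m..<n}. F r) = (\<Sum>r\<in>{0 + m..<(n - m) + m}. F r)" using assms by simp
    also have "\<dots> = (\<Sum>r\<in>{0..<n - m}. F (r + m))" by (rule sum.shift_bounds_nat_ivl)
    finally show ?thesis by (simp add: atLeast0LessThan)
  qed
  finally show ?thesis .
qed

lemma prod_split_nat:
  fixes F :: "nat \<Rightarrow> 'b :: comm_monoid_mult"
  assumes "m \<le> n"
  shows "(\<Prod>r<n. F r) = (\<Prod>r<m. F r) * (\<Prod>r<n - m. F (r + m))"
proof -
  have e: "{..<n} = {..<m} \<union> {m..<n}" using assms by auto
  have "(\<Prod>r<n. F r) = (\<Prod>r<m. F r) * (\<Prod>r\<in>{m..<n}. F r)"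
    by (subst e, rule prod.union_disjoint) auto
  also have "(\<Prod>r\<in>{m..<n}. F r) = (\<Prod>r<n - m. F (r + m))"
  proof -
    have "(\<Prod>r\<in>{m..<n}. F r) = (\<Prod>r\<in>{0 + m..<(n - m) + m}. F r)" using assms by simp
    also have "\<dots> = (\<Prod>r\<in>{0..<n - m}. F (r + m))" by (rule prod.shift_bounds_nat_ivl)
    finally show ?thesis by (simp add: atLeast0LessThan)
  qed
  finally show ?thesis .
qed

lemma prod_list_upt_conv:
  "(\<Prod>a\<leftarrow>map f [0..<n]. h a) = (\<Prod>k<n. h (f k))"
proof -
  have "(\<Prod>a\<leftarrow>map f [0..<n]. h a) = (\<Prod>k\<leftarrow>[0..<n]. h (f k))" by (simp add: comp_def)
  also have "\<dots> = (\<Prod>k\<in>set [0..<n]. h (f k))" by (rule prod.distinct_set_conv_list[symmetric]) simp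
  finally show ?thesis by (simp add: atLeast0LessThan)
qed

lemma trace_comm:
  fixes A :: "complex mat"
  assumes A: "A \<in> carrier_mat a b" and B: "B \<in> carrier_mat b a"
  shows "mat_trace (A * B) = mat_trace (B * A)"
proof -
  have "mat_trace (A * B) = (\<Sum>i<a. (A * B) $$ (i, i))" unfolding mat_trace_def using A by simp
  also have "\<dots> = (\<Sum>i<a. \<Sum>k<b. A $$ (i, k) * B $$ (k, i))"
    by (rule sum.cong[OF refl]) (rule mult_entry[OF A B], auto)
  also have "\<dots> = (\<Sum>k<b. \<Sum>i<a. B $$ (k, i) * A $$ (i, k))"
    by (subst sum.swap) (simp add: mult.commute)
  also have "\<dots> = (\<Sum>k<b. (B * A) $$ (k, k))"
    by (rule sum.cong[OF refl]) (rule mult_entry[OF B A, symmetric], auto)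
  also have "\<dots> = mat_trace (B * A)" unfolding mat_trace_def using B by simp
  finally show ?thesis .
qed

lemma invol_scalar:
  fixes T :: "complex mat"
  assumes T: "T \<in> carrier_mat m m" and TT: "T * T = 1\<^sub>m m"
  shows "\<exists>es. length es = m \<and> set es \<subseteq> {1, -1} \<and>
    char_poly (\<mu> \<cdot>\<^sub>m T) = (\<Prod>k<m. [:- (es ! k * \<mu>), 1:]) \<and>
    2 * (\<Sum>k<m. if es ! k = 1 then 1 else 0) = of_nat m + mat_trace T"
proof -
  obtain as where as: "char_poly T = (\<Prod>a\<leftarrow>as. [:- a, 1:])" "length as = m"
    using char_poly_factorized[OF T] by auto
  obtain B P Q where sd: "schur_decomposition T as = (B, P, Q)" by (cases "schur_decomposition T as") auto
  from schur_decomposition[OF T as(1) sd]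
  have sim: "similar_mat_wit T B P Q" and ut: "upper_triangular B" and dg: "diag_mat B = as" by auto
  have Bc: "B \<in> carrier_mat m m" and Pc: "P \<in> carrier_mat m m" and Qc: "Q \<in> carrier_mat m m"
    and PQ: "P * Q = 1\<^sub>m m" and QP: "Q * P = 1\<^sub>m m" and TPBQ: "T = P * B * Q"
    using sim T unfolding similar_mat_wit_def Let_def by auto
  have BQc: "B * Q \<in> carrier_mat m m" using Bc Qc by simp
  have QTc: "Q * T \<in> carrier_mat m m" using T Qc by simp
  have e1: "P * B * Q = P * (B * Q)" by (rule assoc_mult_mat[OF Pc Bc Qc])
  have BQTP: "B = Q * T * P"
  proof -
    have "Q * T = Q * (P * (B * Q))" using TPBQ e1 by simp
    also have "\<dots> = (Q * P) * (B * Q)" by (rule assoc_mult_mat[symmetric, OF Qc Pc BQc])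
    also have "\<dots> = B * Q" using QP left_mult_one_mat[OF BQc] by simp
    finally have "Q * T * P = B * Q * P" by simp
    also have "\<dots> = B * (Q * P)" by (rule assoc_mult_mat[OF Bc Qc Pc])
    also have "\<dots> = B" using QP Bc by simp
    finally show ?thesis by simp
  qed
  have BB: "B * B = 1\<^sub>m m"
  proof -
    have "B * B = (Q * T * P) * (Q * T * P)" using BQTP by simp
    also have "\<dots> = (Q * T) * (P * (Q * T * P))" by (rule assoc_mult_mat[OF QTc Pc, of _ m]) (use QTc Pc in simp)
    also have "P * (Q * T * P) = (P * Q) * T * P"
      by (simp add: assoc_mult_mat[OF Pc Qc T, symmetric] assoc_mult_mat[OF Pc QTc Pc, symmetric])
    also have "\<dots> = T * P" using PQ T by simp
    also have "(Q * T) * (T * P) = Q * (T * (T * P))" by (rule assoc_mult_mat[OF Qc T, of _ m]) (use T Pc in simp)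
    also have "T * (T * P) = (T * T) * P" by (rule assoc_mult_mat[symmetric, OF T T Pc])
    also have "\<dots> = P" using TT Pc by simp
    also have "Q * P = 1\<^sub>m m" by (rule QP)
    finally show ?thesis .
  qed
  have diag_sq: "B $$ (k, k) * B $$ (k, k) = 1" if k: "k < m" for k
  proof -
    have "(B * B) $$ (k, k) = (\<Sum>r<m. B $$ (k, r) * B $$ (r, k))" by (rule mult_entry[OF Bc Bc k k])
    also have "\<dots> = (\<Sum>r<m. if r = k then B $$ (k, k) * B $$ (k, k) else 0)"
    proof (rule sum.cong)
      fix r assume r: "r \<in> {..<m}"
      show "B $$ (k, r) * B $$ (r, k) = (if r = k then B $$ (k, k) * B $$ (k, k) else 0)"
      proof (cases "r < k")
        case True then show ?thesis using ut Bc k unfolding upper_triangular_def by auto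
      next
        case False
        then show ?thesis using ut Bc r unfolding upper_triangular_def by (cases "r = k") auto
      qed
    qed simp
    also have "\<dots> = B $$ (k, k) * B $$ (k, k)" using k by simp
    finally show ?thesis using BB k by simp
  qed
  have asv: "as ! k = B $$ (k, k)" if "k < m" for k using dg that Bc unfolding diag_mat_def by auto
  have pm: "as ! k = 1 \<or> as ! k = -1" if k: "k < m" for k
  proof -
    have "as ! k * as ! k = 1" using diag_sq[OF k] asv[OF k] by simp
    then have "(as ! k - 1) * (as ! k + 1) = 0" by (simp add: algebra_simps)
    then have "as ! k - 1 = 0 \<or> as ! k + 1 = 0" by simp
    then show ?thesis by (auto simp: eq_neg_iff_add_eq_0)
  qed
  have set_as: "set as \<subseteq> {1, -1}"
  proof
    fix x assume "x \<in> set as"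
    then obtain k where "k < m" "x = as ! k" using as(2) by (auto simp: in_set_conv_nth)
    then show "x \<in> {1, -1}" using pm by auto
  qed
  have muB_ut: "upper_triangular (\<mu> \<cdot>\<^sub>m B)" using ut Bc unfolding upper_triangular_def by auto
  have muBc: "\<mu> \<cdot>\<^sub>m B \<in> carrier_mat m m" using Bc by simp
  have sim2: "similar_mat (\<mu> \<cdot>\<^sub>m T) (\<mu> \<cdot>\<^sub>m B)"
  proof (rule similar_matI[of _ _ P Q m])
    show "{\<mu> \<cdot>\<^sub>m T, \<mu> \<cdot>\<^sub>m B, P, Q} \<subseteq> carrier_mat m m" using T Bc Pc Qc by auto
    show "P * Q = 1\<^sub>m m" "Q * P = 1\<^sub>m m" using PQ QP by auto
    have "P * (\<mu> \<cdot>\<^sub>m B) = \<mu> \<cdot>\<^sub>m (P * B)" by (rule mult_smult_distrib[OF Pc Bc])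
    moreover have "(\<mu> \<cdot>\<^sub>m (P * B)) * Q = \<mu> \<cdot>\<^sub>m (P * B * Q)" by (rule mult_smult_assoc_mat) (use Pc Bc Qc in auto)
    ultimately show "\<mu> \<cdot>\<^sub>m T = P * (\<mu> \<cdot>\<^sub>m B) * Q" using TPBQ by simp
  qed
  have "char_poly (\<mu> \<cdot>\<^sub>m T) = char_poly (\<mu> \<cdot>\<^sub>m B)" by (rule char_poly_similar[OF sim2])
  also have "\<dots> = (\<Prod>a\<leftarrow>diag_mat (\<mu> \<cdot>\<^sub>m B). [:- a, 1:])"
    by (rule char_poly_upper_triangular[OF muBc muB_ut])
  also have "diag_mat (\<mu> \<cdot>\<^sub>m B) = map (\<lambda>k. as ! k * \<mu>) [0..<m]"
    using Bc asv unfolding diag_mat_def by (auto simp: mult.commute)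
  also have "(\<Prod>a\<leftarrow>map (\<lambda>k. as ! k * \<mu>) [0..<m]. [:- a, 1:]) = (\<Prod>k<m. [:- (as ! k * \<mu>), 1:])"
    by (rule prod_list_upt_conv)
  finally have cp: "char_poly (\<mu> \<cdot>\<^sub>m T) = (\<Prod>k<m. [:- (as ! k * \<mu>), 1:])" .
  have "mat_trace T = mat_trace (P * (B * Q))" using TPBQ e1 by simp
  also have "\<dots> = mat_trace ((B * Q) * P)" by (rule trace_comm[OF Pc BQc])
  also have "(B * Q) * P = B * (Q * P)" by (rule assoc_mult_mat[OF Bc Qc Pc])
  also have "\<dots> = B" using QP Bc by simp
  finally have trT: "mat_trace T = (\<Sum>k<m. as ! k)" using Bc asv unfolding mat_trace_def by simp
  have "2 * (\<Sum>k<m. if as ! k = 1 then 1 else 0) = (\<Sum>k<m. (1::complex) + as ! k)"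
  proof (subst sum_distrib_left, rule sum.cong)
    fix k assume "k \<in> {..<m}"
    then have "as ! k = 1 \<or> as ! k = -1" using pm by auto
    then show "2 * (if as ! k = 1 then 1 else 0) = (1::complex) + as ! k" by auto
  qed simp
  also have "\<dots> = of_nat m + mat_trace T" using trT by (simp add: sum.distrib)
  finally show ?thesis using as(2) set_as cp by blast
qed


lemma block_invol:
  fixes T :: "complex mat" and kl :: "nat list" and g :: "nat \<Rightarrow> complex"
  assumes "T \<in> carrier_mat n n" "T * T = 1\<^sub>m n" "length kl = n" "sorted kl"
    "\<forall>i<n. \<forall>j<n. kl ! i \<noteq> kl ! j \<longrightarrow> T $$ (i, j) = 0"
  shows "\<exists>es. length es = n \<and> set es \<subseteq> {1, -1} \<and>
    char_poly (mat n n (\<lambda>(i, j). T $$ (i, j) * g (kl ! j))) = (\<Prod>k<n. [:- (es ! k * g (kl ! k)), 1:]) \<and>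
    2 * (\<Sum>k<n. if es ! k = 1 then 1 else 0) = of_nat n + mat_trace T"
  using assms
proof (induction n arbitrary: T kl rule: less_induct)
  case (less n)
  note Tc = less.prems(1) and TT = less.prems(2) and len = less.prems(3) and srt = less.prems(4)
    and blk = less.prems(5)
  show ?case
  proof (cases "n = 0")
    case True
    let ?C = "mat n n (\<lambda>(i, j). T $$ (i, j) * g (kl ! j))"
    have Cc: "?C \<in> carrier_mat 0 0" using True by simp
    have "upper_triangular ?C" unfolding upper_triangular_def using True by simp
    then have "char_poly ?C = (\<Prod>a\<leftarrow>diag_mat ?C. [:- a, 1:])" by (rule char_poly_upper_triangular[OF Cc])
    also have "\<dots> = 1" using True by (simp add: diag_mat_def)
    finally have "char_poly ?C = 1" .
    moreover have "mat_trace T = 0" using True Tc unfolding mat_trace_def by simp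
    ultimately show ?thesis using True by (intro exI[of _ "[]"]) simp
  next
    case False
    then have n0: "0 < n" by simp
    define k0 where "k0 = kl ! 0"
    define m where "m = length (takeWhile (\<lambda>x. x = k0) kl)"
    define n' where "n' = n - m"
    have mn: "m \<le> n" unfolding m_def using len length_takeWhile_le by metis
    have m0: "0 < m"
    proof -
      obtain y ys where "kl = y # ys" using len n0 by (cases kl) auto
      then show ?thesis unfolding m_def k0_def by simp
    qed
    have in1: "kl ! i = k0" if "i < m" for i
    proof -
      have "takeWhile (\<lambda>x. x = k0) kl ! i = kl ! i" using that unfolding m_def by (rule takeWhile_nth)
      moreover have "takeWhile (\<lambda>x. x = k0) kl ! i \<in> set (takeWhile (\<lambda>x. x = k0) kl)"
        using that unfolding m_def by simp
      ultimately show ?thesis by (metis (mono_tags) set_takeWhileD)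
    qed
    have out: "kl ! j \<noteq> k0" if j1: "m \<le> j" and j2: "j < n" for j
    proof -
      have mlt: "m < length kl" using j1 j2 len by simp
      then have "kl ! m \<noteq> k0" using nth_length_takeWhile[of "\<lambda>x. x = k0" kl] unfolding m_def by simp
      moreover have "k0 \<le> kl ! m" unfolding k0_def by (rule sorted_nth_mono[OF srt]) (use mlt in auto)
      moreover have "kl ! m \<le> kl ! j" by (rule sorted_nth_mono[OF srt j1]) (use j2 len in simp)
      ultimately show ?thesis by simp
    qed
    have z1: "T $$ (i, j) = 0" if "i < m" "m \<le> j" "j < n" for i j
    proof -
      have "i < n" using that mn by simp
      moreover have "kl ! i \<noteq> kl ! j" using in1[of i] out[of j] that by simp
      ultimately show ?thesis using blk that(3) by blast
    qed
    have z2: "T $$ (j, i) = 0" if "i < m" "m \<le> j" "j < n" for i j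
    proof -
      have "i < n" using that mn by simp
      moreover have "kl ! j \<noteq> kl ! i" using in1[of i] out[of j] that by simp
      ultimately show ?thesis using blk that(3) by blast
    qed
    define T1 where "T1 = mat m m (\<lambda>(i, j). T $$ (i, j))"
    define T4 where "T4 = mat n' n' (\<lambda>(i, j). T $$ (i + m, j + m))"
    define kl4 where "kl4 = drop m kl"
    have T1c: "T1 \<in> carrier_mat m m" unfolding T1_def by simp
    have T4c: "T4 \<in> carrier_mat n' n'" unfolding T4_def by simp
    have nn': "n = m + n'" unfolding n'_def using mn by simp
    have T1T1: "T1 * T1 = 1\<^sub>m m"
    proof (rule eq_matI)
      fix i j assume "i < dim_row (1\<^sub>m m :: complex mat)" "j < dim_col (1\<^sub>m m :: complex mat)"
      then have i: "i < m" and j: "j < m" by auto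
      have "(T1 * T1) $$ (i, j) = (\<Sum>r<m. T1 $$ (i, r) * T1 $$ (r, j))" by (rule mult_entry[OF T1c T1c i j])
      also have "\<dots> = (\<Sum>r<m. T $$ (i, r) * T $$ (r, j))"
        by (rule sum.cong) (use i j in \<open>auto simp: T1_def\<close>)
      also have "\<dots> = (\<Sum>r<n. T $$ (i, r) * T $$ (r, j))"
      proof -
        have s: "(\<Sum>r<n. T $$ (i, r) * T $$ (r, j)) = (\<Sum>r<m. T $$ (i, r) * T $$ (r, j)) + (\<Sum>r<n'. T $$ (i, r + m) * T $$ (r + m, j))"
          unfolding n'_def by (rule sum_split_nat[OF mn])
        have "(\<Sum>r<n'. T $$ (i, r + m) * T $$ (r + m, j)) = 0"
          by (rule sum.neutral) (use z1[OF i] nn' in auto)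
        then show ?thesis using s by simp
      qed
      also have "\<dots> = (T * T) $$ (i, j)" using mult_entry[OF Tc Tc, of i j] i j mn by simp
      also have "\<dots> = 1\<^sub>m m $$ (i, j)" using TT i j mn by simp
      finally show "(T1 * T1) $$ (i, j) = 1\<^sub>m m $$ (i, j)" .
    qed (use T1c in auto)
    have T4T4: "T4 * T4 = 1\<^sub>m n'"
    proof (rule eq_matI)
      fix i j assume "i < dim_row (1\<^sub>m n' :: complex mat)" "j < dim_col (1\<^sub>m n' :: complex mat)"
      then have i: "i < n'" and j: "j < n'" by auto
      have "(T4 * T4) $$ (i, j) = (\<Sum>r<n'. T4 $$ (i, r) * T4 $$ (r, j))" by (rule mult_entry[OF T4c T4c i j])
      also have "\<dots> = (\<Sum>r<n'. T $$ (i + m, r + m) * T $$ (r + m, j + m))"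
        by (rule sum.cong) (use i j in \<open>auto simp: T4_def\<close>)
      also have "\<dots> = (\<Sum>r<n. T $$ (i + m, r) * T $$ (r, j + m))"
      proof -
        have s: "(\<Sum>r<n. T $$ (i + m, r) * T $$ (r, j + m)) = (\<Sum>r<m. T $$ (i + m, r) * T $$ (r, j + m)) + (\<Sum>r<n'. T $$ (i + m, r + m) * T $$ (r + m, j + m))"
          unfolding n'_def by (rule sum_split_nat[OF mn])
        have "(\<Sum>r<m. T $$ (i + m, r) * T $$ (r, j + m)) = 0"
          by (rule sum.neutral) (use z2 i nn' in auto)
        then show ?thesis using s by simp
      qed
      also have "\<dots> = (T * T) $$ (i + m, j + m)" using mult_entry[OF Tc Tc, of "i + m" "j + m"] i j nn' by simp
      also have "\<dots> = 1\<^sub>m n' $$ (i, j)" using TT i j nn' by simp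
      finally show "(T4 * T4) $$ (i, j) = 1\<^sub>m n' $$ (i, j)" .
    qed (use T4c in auto)
    have len4: "length kl4 = n'" unfolding kl4_def n'_def using len by simp
    have srt4: "sorted kl4" unfolding kl4_def using srt sorted_wrt_drop by blast
    have kl4n: "kl4 ! i = kl ! (i + m)" if "i < n'" for i unfolding kl4_def using that len4 kl4_def
      by (simp add: add.commute)
    have blk4: "\<forall>i<n'. \<forall>j<n'. kl4 ! i \<noteq> kl4 ! j \<longrightarrow> T4 $$ (i, j) = 0"
      using blk kl4n nn' unfolding T4_def by auto
    have n'n: "n' < n" using m0 nn' by simp
    obtain es4 where es4: "length es4 = n'" "set es4 \<subseteq> {1, -1}"
      "char_poly (mat n' n' (\<lambda>(i, j). T4 $$ (i, j) * g (kl4 ! j))) = (\<Prod>k<n'. [:- (es4 ! k * g (kl4 ! k)), 1:])"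
      "2 * (\<Sum>k<n'. if es4 ! k = 1 then 1 else 0) = of_nat n' + mat_trace T4"
      using less.IH[OF n'n T4c T4T4 len4 srt4 blk4] by blast
    obtain es1 where es1: "length es1 = m" "set es1 \<subseteq> {1, -1}"
      "char_poly (g k0 \<cdot>\<^sub>m T1) = (\<Prod>k<m. [:- (es1 ! k * g k0), 1:])"
      "2 * (\<Sum>k<m. if es1 ! k = 1 then 1 else 0) = of_nat m + mat_trace T1"
      using invol_scalar[OF T1c T1T1] by blast
    define C1 where "C1 = g k0 \<cdot>\<^sub>m T1"
    define C4 where "C4 = mat n' n' (\<lambda>(i, j). T4 $$ (i, j) * g (kl4 ! j))"
    have C1c: "C1 \<in> carrier_mat m m" unfolding C1_def using T1c by simp
    have C4c: "C4 \<in> carrier_mat n' n'" unfolding C4_def by simp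
    have Ceq: "mat n n (\<lambda>(i, j). T $$ (i, j) * g (kl ! j)) = four_block_mat C1 (0\<^sub>m m n') (0\<^sub>m n' m) C4"
    proof (rule eq_matI)
      fix i j assume "i < dim_row (four_block_mat C1 (0\<^sub>m m n') (0\<^sub>m n' m) C4)"
        "j < dim_col (four_block_mat C1 (0\<^sub>m m n') (0\<^sub>m n' m) C4)"
      then have i: "i < n" and j: "j < n" using C1c C4c nn' by auto
      show "mat n n (\<lambda>(i, j). T $$ (i, j) * g (kl ! j)) $$ (i, j) = four_block_mat C1 (0\<^sub>m m n') (0\<^sub>m n' m) C4 $$ (i, j)"
      proof (cases "i < m")
        case True
        then show ?thesis
        proof (cases "j < m")
          case True
          then show ?thesis using \<open>i < m\<close> i j C1c C4c nn' in1[of j] unfolding C1_def T1_def by simp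
        next
          case False
          then show ?thesis using \<open>i < m\<close> i j C1c C4c nn' z1[of i j] by simp
        qed
      next
        case False
        then show ?thesis
        proof (cases "j < m")
          case True
          then show ?thesis using \<open>\<not> i < m\<close> i j C1c C4c nn' z2[of j i] by simp
        next
          case False
          have "kl4 ! (j - m) = kl ! j" using kl4n[of "j - m"] False j nn' by simp
          then show ?thesis using \<open>\<not> i < m\<close> False i j C1c C4c nn' unfolding C4_def T4_def by simp
        qed
      qed
    qed (use C1c C4c nn' in auto)
    have "char_poly (mat n n (\<lambda>(i, j). T $$ (i, j) * g (kl ! j))) = char_poly C1 * char_poly C4"
      by (rule char_poly_0_block[OF Ceq _ _ C1c _ C4c])
         (use char_poly_factorized[OF C1c] char_poly_factorized[OF C4c] in auto)
    also have "\<dots> = (\<Prod>k<n. [:- ((es1 @ es4) ! k * g (kl ! k)), 1:])"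
    proof -
      have "(\<Prod>k<n. [:- ((es1 @ es4) ! k * g (kl ! k)), 1:]) =
        (\<Prod>k<m. [:- ((es1 @ es4) ! k * g (kl ! k)), 1:]) * (\<Prod>k<n'. [:- ((es1 @ es4) ! (k + m) * g (kl ! (k + m))), 1:])"
        using prod_split_nat[OF mn] n'_def by simp
      also have "(\<Prod>k<m. [:- ((es1 @ es4) ! k * g (kl ! k)), 1:]) = (\<Prod>k<m. [:- (es1 ! k * g k0), 1:])"
        by (rule prod.cong) (use es1(1) in1 in \<open>auto simp: nth_append\<close>)
      also have "(\<Prod>k<n'. [:- ((es1 @ es4) ! (k + m) * g (kl ! (k + m))), 1:]) = (\<Prod>k<n'. [:- (es4 ! k * g (kl4 ! k)), 1:])"
        by (rule prod.cong) (use es1(1) kl4n in \<open>auto simp: nth_append\<close>)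
      finally show ?thesis using es1(3) es4(3) unfolding C1_def C4_def by simp
    qed
    finally have cp: "char_poly (mat n n (\<lambda>(i, j). T $$ (i, j) * g (kl ! j))) = (\<Prod>k<n. [:- ((es1 @ es4) ! k * g (kl ! k)), 1:])" .
    have trsplit: "mat_trace T = mat_trace T1 + mat_trace T4"
    proof -
      have "mat_trace T = (\<Sum>r<n. T $$ (r, r))" unfolding mat_trace_def using Tc by simp
      also have "\<dots> = (\<Sum>r<m. T $$ (r, r)) + (\<Sum>r<n'. T $$ (r + m, r + m))"
        using sum_split_nat[OF mn] n'_def by simp
      also have "(\<Sum>r<m. T $$ (r, r)) = mat_trace T1" unfolding mat_trace_def T1_def by simp
      also have "(\<Sum>r<n'. T $$ (r + m, r + m)) = mat_trace T4" unfolding mat_trace_def T4_def by simp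
      finally show ?thesis .
    qed
    have cnt: "(\<Sum>k<n. if (es1 @ es4) ! k = 1 then 1 else 0) =
        (\<Sum>k<m. if es1 ! k = 1 then 1 else 0) + (\<Sum>k<n'. if es4 ! k = 1 then (1::complex) else 0)"
    proof -
      have "(\<Sum>k<n. if (es1 @ es4) ! k = 1 then 1 else 0) =
          (\<Sum>k<m. if (es1 @ es4) ! k = 1 then 1 else 0) + (\<Sum>k<n'. if (es1 @ es4) ! (k + m) = 1 then (1::complex) else 0)"
        using sum_split_nat[OF mn] n'_def by simp
      also have "(\<Sum>k<m. if (es1 @ es4) ! k = 1 then 1 else 0) = (\<Sum>k<m. if es1 ! k = 1 then (1::complex) else 0)"
        by (rule sum.cong) (use es1(1) in \<open>auto simp: nth_append\<close>)
      also have "(\<Sum>k<n'. if (es1 @ es4) ! (k + m) = 1 then 1 else 0) = (\<Sum>k<n'. if es4 ! k = 1 then (1::complex) else 0)"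
        by (rule sum.cong) (use es1(1) in \<open>auto simp: nth_append\<close>)
      finally show ?thesis .
    qed
    show ?thesis
    proof (intro exI[of _ "es1 @ es4"] conjI)
      show "length (es1 @ es4) = n" using es1(1) es4(1) nn' by simp
      show "set (es1 @ es4) \<subseteq> {1, -1}" using es1(2) es4(2) by auto
      show "char_poly (mat n n (\<lambda>(i, j). T $$ (i, j) * g (kl ! j))) = (\<Prod>k<n. [:- ((es1 @ es4) ! k * g (kl ! k)), 1:])"
        by (rule cp)
      show "2 * (\<Sum>k<n. if (es1 @ es4) ! k = 1 then 1 else 0) = of_nat n + mat_trace T"
        using cnt es1(4) es4(4) trsplit nn' by (simp add: algebra_simps)
    qed
  qed
qed


context irrsys
begin

lemma MM_carrier[simp]: "MM ks \<in> carrier_mat nn (length ks)" unfolding MM_def by simp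
lemma MM_dims[simp]: "dim_row (MM ks) = nn" "dim_col (MM ks) = length ks" unfolding MM_def by simp_all
lemma MM'_dims[simp]: "dim_row (MM' ks) = length ks" "dim_col (MM' ks) = nn" unfolding MM'_def by simp_all
lemma inv_cancel_l: "x \<in> carrier G \<Longrightarrow> y \<in> carrier G \<Longrightarrow> inv x \<otimes> (x \<otimes> y) = y"
  by (simp add: m_assoc[symmetric])
lemma cancel_l_inv: "x \<in> carrier G \<Longrightarrow> y \<in> carrier G \<Longrightarrow> x \<otimes> (inv x \<otimes> y) = y"
  by (simp add: m_assoc[symmetric])
lemma MM'_carrier[simp]: "MM' ks \<in> carrier_mat (length ks) nn" unfolding MM'_def by simp

lemma ks_size:
  assumes ks: "distinct ks" "set ks = II"
  shows "length ks = nn" "MM ks * MM' ks = 1\<^sub>m nn"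
proof -
  let ?N = "length ks"
  have inj': "injm (MM' ks) nn" unfolding injm_def
  proof (intro ballI impI)
    fix v :: "complex vec" assume v: "v \<in> carrier_vec nn" and z: "MM' ks *\<^sub>v v = 0\<^sub>v (dim_row (MM' ks))"
    have "v \<in> WW" unfolding WW_def
    proof (intro CollectI conjI v allI impI)
      fix i a b assume i: "i < length reps" and a: "a < dd i" and b: "b < dd i"
      have "(i, a, b) \<in> set ks" using ks i a b II_iff by auto
      then obtain k where k: "k < ?N" "ks ! k = (i, a, b)" by (auto simp: in_set_conv_nth)
      have "(MM' ks *\<^sub>v v) $ k = (\<Sum>x<nn. MM' ks $$ (k, x) * v $ x)" by (rule mv_entry[OF MM'_carrier v k(1)])
      also have "\<dots> = (\<Sum>x<nn. of_nat (dd i) / of_nat nn * (rr i (inv (vs ! x)) $$ (b, a) * v $ x))"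
        by (rule sum.cong) (use k in \<open>auto simp: MM'_def\<close>)
      also have "\<dots> = of_nat (dd i) / of_nat nn * cf v i a b" unfolding cf_def by (rule sum_distrib_left[symmetric])
      finally have "of_nat (dd i) / of_nat nn * cf v i a b = 0" using z k by simp
      then show "cf v i a b = 0" using dd_pos[OF i] nn_pos by simp
    qed
    then show "v = 0\<^sub>v nn" using WW_zero by simp
  qed
  have MM'MM: "MM' ks * MM ks = 1\<^sub>m ?N" by (rule MM'_MM[OF ks])
  have inj: "injm (MM ks) ?N" unfolding injm_def
  proof (intro ballI impI)
    fix v :: "complex vec" assume v: "v \<in> carrier_vec ?N" and z: "MM ks *\<^sub>v v = 0\<^sub>v (dim_row (MM ks))"
    have "v = (MM' ks * MM ks) *\<^sub>v v" using MM'MM v by simp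
    also have "\<dots> = MM' ks *\<^sub>v (MM ks *\<^sub>v v)" by (rule assoc_mult_mat_vec[OF MM'_carrier MM_carrier v])
    also have "\<dots> = 0\<^sub>v ?N" using z by (auto simp: scalar_prod_def)
    finally show "v = 0\<^sub>v ?N" .
  qed
  have "nn \<le> ?N" by (rule inj_le[OF MM'_carrier inj'])
  moreover have "?N \<le> nn" by (rule inj_le[OF MM_carrier inj])
  ultimately show N: "?N = nn" by simp
  show "MM ks * MM' ks = 1\<^sub>m nn"
  proof -
    have "MM ks * MM' ks = 1\<^sub>m ?N" by (rule mat_mult_left_right_inverse[OF _ _ MM'MM]) (use N in auto)
    then show ?thesis using N by simp
  qed
qed

definition lam :: "'a set \<Rightarrow> nat \<Rightarrow> complex" where
  "lam S i = rep_lambda S (dd i) (rr i)"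

lemma sum_conj:
  assumes S: "S \<subseteq> carrier G" and conj: "\<forall>g\<in>carrier G. \<forall>s\<in>S. g \<otimes> s \<otimes> inv g \<in> S"
    and g: "g \<in> carrier G"
  shows "(\<Sum>s\<in>S. F (g \<otimes> s)) = (\<Sum>s\<in>S. F (s \<otimes> g))"
proof (rule sum.reindex_bij_witness[of _ "\<lambda>s. inv g \<otimes> s \<otimes> g" "\<lambda>s. g \<otimes> s \<otimes> inv g"])
  fix s assume s: "s \<in> S"
  then have sc: "s \<in> carrier G" using S by auto
  show "inv g \<otimes> (g \<otimes> s \<otimes> inv g) \<otimes> g = s" using sc g by (simp add: m_assoc inv_cancel_l cancel_l_inv)
  show "g \<otimes> s \<otimes> inv g \<in> S" using conj g s by auto
  show "F (g \<otimes> s \<otimes> inv g \<otimes> g) = F (g \<otimes> s)" using sc g by (simp add: m_assoc inv_cancel_l cancel_l_inv)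
next
  fix s assume s: "s \<in> S"
  then have sc: "s \<in> carrier G" using S by auto
  show "g \<otimes> (inv g \<otimes> s \<otimes> g) \<otimes> inv g = s" using sc g by (simp add: m_assoc inv_cancel_l cancel_l_inv)
  have "inv g \<otimes> s \<otimes> inv (inv g) \<in> S" using conj[rule_format, of "inv g" s] g s by simp
  then show "inv g \<otimes> s \<otimes> g \<in> S" using g by simp
qed

lemma sumS_scalar:
  assumes S: "S \<subseteq> carrier G" and conj: "\<forall>g\<in>carrier G. \<forall>s\<in>S. g \<otimes> s \<otimes> inv g \<in> S"
    and i: "i < length reps" and p: "p < dd i" and q: "q < dd i"
  shows "(\<Sum>s\<in>S. rr i s $$ (p, q)) = (if p = q then lam S i else 0)"
proof -
  let ?d = "dd i" and ?\<rho> = "rr i"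
  have rep: "is_rep G ?d ?\<rho>" by (rule rep_i[OF i])
  have finS: "finite S" using S fin finite_subset by auto
  define X where "X = mat ?d ?d (\<lambda>(p, q). \<Sum>s\<in>S. ?\<rho> s $$ (p, q))"
  have Xc: "X \<in> carrier_mat ?d ?d" unfolding X_def by simp
  have comm: "\<forall>g\<in>carrier G. X * ?\<rho> g = ?\<rho> g * X"
  proof
    fix g assume g: "g \<in> carrier G"
    have rg: "?\<rho> g \<in> carrier_mat ?d ?d" by (rule rep_carrier[OF rep g])
    show "X * ?\<rho> g = ?\<rho> g * X"
    proof (rule eq_matI)
      fix p q assume "p < dim_row (?\<rho> g * X)" "q < dim_col (?\<rho> g * X)"
      then have p: "p < ?d" and q: "q < ?d" using rg Xc by auto
      have "(X * ?\<rho> g) $$ (p, q) = (\<Sum>r<?d. X $$ (p, r) * ?\<rho> g $$ (r, q))" by (rule mult_entry[OF Xc rg p q])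
      also have "\<dots> = (\<Sum>r<?d. (\<Sum>s\<in>S. ?\<rho> s $$ (p, r)) * ?\<rho> g $$ (r, q))"
        by (rule sum.cong) (use p in \<open>auto simp: X_def\<close>)
      also have "\<dots> = (\<Sum>s\<in>S. 1 * (\<Sum>r<?d. ?\<rho> s $$ (p, r) * ?\<rho> g $$ (r, q)))"
        using swap_helper[where d = "?d" and a = "\<lambda>_. 1" and bb = "\<lambda>s r. ?\<rho> s $$ (p, r)" and A = S and cc = "\<lambda>r. ?\<rho> g $$ (r, q)"] by simp
      also have "\<dots> = (\<Sum>s\<in>S. ?\<rho> (s \<otimes> g) $$ (p, q))"
      proof (rule sum.cong)
        fix s assume s: "s \<in> S"
        then have sc: "s \<in> carrier G" using S by auto
        show "1 * (\<Sum>r<?d. ?\<rho> s $$ (p, r) * ?\<rho> g $$ (r, q)) = ?\<rho> (s \<otimes> g) $$ (p, q)"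
          using mult_entry[OF rep_carrier[OF rep sc] rg p q] rep_mult[OF rep sc g] by simp
      qed simp
      also have "\<dots> = (\<Sum>s\<in>S. ?\<rho> (g \<otimes> s) $$ (p, q))" by (rule sum_conj[OF S conj g, symmetric])
      also have "\<dots> = (\<Sum>s\<in>S. (\<Sum>r<?d. ?\<rho> g $$ (p, r) * ?\<rho> s $$ (r, q)) * 1)"
      proof (rule sum.cong)
        fix s assume s: "s \<in> S"
        then have sc: "s \<in> carrier G" using S by auto
        show "?\<rho> (g \<otimes> s) $$ (p, q) = (\<Sum>r<?d. ?\<rho> g $$ (p, r) * ?\<rho> s $$ (r, q)) * 1"
          using mult_entry[OF rg rep_carrier[OF rep sc] p q] rep_mult[OF rep g sc] by simp
      qed simp
      also have "\<dots> = (\<Sum>r<?d. ?\<rho> g $$ (p, r) * (\<Sum>s\<in>S. ?\<rho> s $$ (r, q) * 1))"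
        by (rule swap_helper2[symmetric])
      also have "\<dots> = (\<Sum>r<?d. ?\<rho> g $$ (p, r) * X $$ (r, q))"
        by (rule sum.cong) (use q in \<open>auto simp: X_def\<close>)
      also have "\<dots> = (?\<rho> g * X) $$ (p, q)" by (rule mult_entry[OF rg Xc p q, symmetric])
      finally show "(X * ?\<rho> g) $$ (p, q) = (?\<rho> g * X) $$ (p, q)" .
    qed (use rg Xc in auto)
  qed
  obtain c where c: "X = c \<cdot>\<^sub>m 1\<^sub>m ?d" using schur_square[OF irr_i[OF i] Xc comm] by auto
  have "(\<Sum>p<?d. X $$ (p, p)) = (\<Sum>p<?d. \<Sum>s\<in>S. ?\<rho> s $$ (p, p))"
    by (rule sum.cong) (auto simp: X_def)
  also have "\<dots> = (\<Sum>s\<in>S. \<Sum>p<?d. ?\<rho> s $$ (p, p))" by (rule sum.swap)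
  also have "\<dots> = (\<Sum>s\<in>S. character ?\<rho> s)"
  proof (rule sum.cong)
    fix s assume "s \<in> S"
    then have "?\<rho> s \<in> carrier_mat ?d ?d" using rep_carrier[OF rep] S by auto
    then show "(\<Sum>p<?d. ?\<rho> s $$ (p, p)) = character ?\<rho> s" unfolding character_def mat_trace_def by simp
  qed simp
  finally have "(\<Sum>s\<in>S. character ?\<rho> s) = of_nat ?d * c" using c by simp
  then have cl: "c = lam S i" unfolding lam_def rep_lambda_def using dd_pos[OF i] by (simp add: field_simps)
  have "(\<Sum>s\<in>S. rr i s $$ (p, q)) = X $$ (p, q)" using p q by (simp add: X_def)
  also have "\<dots> = (if p = q then c else 0)" using c p q by simp
  finally show ?thesis using cl by simp
qed

definition RR :: "'a set \<Rightarrow> complex mat" where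
  "RR S = mat nn nn (\<lambda>(x, y). if inv (vs ! x) \<otimes> vs ! y \<in> S then 1 else 0)"
definition DD :: "'a set \<Rightarrow> (nat \<times> nat \<times> nat) list \<Rightarrow> complex mat" where
  "DD S ks = mat (length ks) (length ks) (\<lambda>(k, l). if k = l then lam S (fst (ks ! k)) else 0)"

lemma RR_carrier[simp]: "RR S \<in> carrier_mat nn nn" unfolding RR_def by simp
lemma DD_carrier[simp]: "DD S ks \<in> carrier_mat (length ks) (length ks)" unfolding DD_def by simp
lemma RR_dims[simp]: "dim_row (RR S) = nn" "dim_col (RR S) = nn" unfolding RR_def by simp_all
lemma DD_dims[simp]: "dim_row (DD S ks) = length ks" "dim_col (DD S ks) = length ks" unfolding DD_def by simp_all

lemma sum_filterS:
  assumes S: "S \<subseteq> carrier G" and X: "X \<in> carrier G"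
  shows "(\<Sum>w\<in>carrier G. if inv X \<otimes> w \<in> S then F w else 0) = (\<Sum>s\<in>S. F (X \<otimes> s))"
proof -
  have "(\<Sum>w\<in>carrier G. if inv X \<otimes> w \<in> S then F w else 0) = (\<Sum>w\<in>{w \<in> carrier G. inv X \<otimes> w \<in> S}. F w)"
    using fin by (simp add: sum.inter_filter)
  also have "\<dots> = (\<Sum>s\<in>S. F (X \<otimes> s))"
    by (rule sum.reindex_bij_witness[of _ "\<lambda>s. X \<otimes> s" "\<lambda>w. inv X \<otimes> w"])
       (use X S in \<open>auto simp: inv_cancel_l cancel_l_inv\<close>)
  finally show ?thesis .
qed

lemma RR_MM:
  assumes S: "S \<subseteq> carrier G" and conj: "\<forall>g\<in>carrier G. \<forall>s\<in>S. g \<otimes> s \<otimes> inv g \<in> S"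
    and ks: "distinct ks" "set ks = II"
  shows "RR S * MM ks = MM ks * DD S ks"
proof (rule eq_matI)
  let ?N = "length ks"
  fix x k assume "x < dim_row (MM ks * DD S ks)" "k < dim_col (MM ks * DD S ks)"
  then have x: "x < nn" and k: "k < ?N" by auto
  obtain i a b where kk: "ks ! k = (i, a, b)" by (cases "ks ! k") auto
  have "(i, a, b) \<in> II" using kk k ks nth_mem by metis
  then have i: "i < length reps" and a: "a < dd i" and b: "b < dd i" using II_iff by auto
  define X where "X = vs ! x"
  have Xc: "X \<in> carrier G" unfolding X_def using vs_in[OF x] .
  have rep: "is_rep G (dd i) (rr i)" by (rule rep_i[OF i])
  have "(RR S * MM ks) $$ (x, k) = (\<Sum>y<nn. RR S $$ (x, y) * MM ks $$ (y, k))"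
    by (rule mult_entry[OF RR_carrier MM_carrier x k])
  also have "\<dots> = (\<Sum>y<nn. (\<lambda>w. if inv X \<otimes> w \<in> S then rr i w $$ (a, b) else 0) (vs ! y))"
    by (rule sum.cong) (use x k kk in \<open>auto simp: RR_def MM_def X_def\<close>)
  also have "\<dots> = (\<Sum>w\<in>carrier G. if inv X \<otimes> w \<in> S then rr i w $$ (a, b) else 0)" by (rule sum_vs)
  also have "\<dots> = (\<Sum>s\<in>S. rr i (X \<otimes> s) $$ (a, b))" by (rule sum_filterS[OF S Xc])
  also have "\<dots> = (\<Sum>s\<in>S. (\<Sum>r<dd i. rr i X $$ (a, r) * rr i s $$ (r, b)) * 1)"
  proof (rule sum.cong)
    fix s assume s: "s \<in> S"
    then have sc: "s \<in> carrier G" using S by auto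
    show "rr i (X \<otimes> s) $$ (a, b) = (\<Sum>r<dd i. rr i X $$ (a, r) * rr i s $$ (r, b)) * 1"
      using mult_entry[OF rep_carrier[OF rep Xc] rep_carrier[OF rep sc] a b] rep_mult[OF rep Xc sc] by simp
  qed simp
  also have "\<dots> = (\<Sum>r<dd i. rr i X $$ (a, r) * (\<Sum>s\<in>S. rr i s $$ (r, b) * 1))"
    by (rule swap_helper2[symmetric])
  also have "\<dots> = (\<Sum>r<dd i. rr i X $$ (a, r) * (if r = b then lam S i else 0))"
    by (rule sum.cong) (use sumS_scalar[OF S conj i _ b] in auto)
  also have "\<dots> = rr i X $$ (a, b) * lam S i" using b by (simp add: if_distrib cong: if_cong)
  also have "\<dots> = (\<Sum>l<?N. MM ks $$ (x, l) * DD S ks $$ (l, k))"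
  proof -
    have "(\<Sum>l<?N. MM ks $$ (x, l) * DD S ks $$ (l, k)) = (\<Sum>l<?N. if l = k then MM ks $$ (x, k) * lam S i else 0)"
      by (rule sum.cong) (use k kk in \<open>auto simp: DD_def\<close>)
    also have "\<dots> = MM ks $$ (x, k) * lam S i" using k by simp
    also have "\<dots> = rr i X $$ (a, b) * lam S i" using x k kk by (simp add: MM_def X_def)
    finally show ?thesis by simp
  qed
  also have "\<dots> = (MM ks * DD S ks) $$ (x, k)" by (rule mult_entry[OF MM_carrier DD_carrier x k, symmetric])
  finally show "(RR S * MM ks) $$ (x, k) = (MM ks * DD S ks) $$ (x, k)" .
qed auto

end


lemma order_linprod:
  fixes M :: "complex multiset"
  shows "Polynomial.order x (\<Prod>a\<in>#M. [:- a, 1:]) = count M x"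
proof (induction M)
  case empty
  then show ?case by (simp add: order_0I)
next
  case (add a M)
  have nz: "(\<Prod>a\<in>#M. [:- a, 1:]) \<noteq> 0" by (auto simp: prod_mset_zero_iff)
  have "Polynomial.order x (\<Prod>a\<in>#add_mset a M. [:- a, 1:]) = Polynomial.order x ([:- a, 1:] * (\<Prod>a\<in>#M. [:- a, 1:]))" by simp
  also have "\<dots> = Polynomial.order x [:- a, 1:] + Polynomial.order x (\<Prod>a\<in>#M. [:- a, 1:])"
  proof (rule order_mult)
    have "[:- a, 1:] \<noteq> (0::complex poly)" by simp
    then show "[:- a, 1:] * (\<Prod>a\<in>#M. [:- a, 1:]) \<noteq> 0" using nz by (rule no_zero_divisors)
  qed
  also have "Polynomial.order x [:- a, 1:] = (if x = a then 1 else 0)"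
  proof (cases "x = a")
    case True
    then show ?thesis using order_power_n_n[of a 1] by simp
  next
    case False
    have "Polynomial.order x [:- a, 1:] = 0" by (rule order_0I) (use False in simp)
    then show ?thesis using False by simp
  qed
  finally show ?case using add by simp
qed

lemma eig_mset_eq:
  assumes "char_poly A = (\<Prod>a\<in>#E. [:- a, 1:])"
  shows "eigenvalue_mset A = E"
  unfolding eigenvalue_mset_def
proof (rule the_equality)
  show "char_poly A = (\<Prod>a\<in>#E. [:- a, 1:])" by (rule assms)
  fix M assume "char_poly A = (\<Prod>a\<in>#M. [:- a, 1:])"
  then have "(\<Prod>a\<in>#M. [:- a, 1:]) = (\<Prod>a\<in>#E. [:- a, 1:])" using assms by simp
  then have "Polynomial.order x (\<Prod>a\<in>#M. [:- a, 1:]) = Polynomial.order x (\<Prod>a\<in>#E. [:- a, 1:])" for x by simp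
  then show "M = E" by (intro multiset_eqI) (simp add: order_linprod)
qed

context irrsys
begin

definition TT :: "('a \<Rightarrow> 'a) \<Rightarrow> complex mat" where
  "TT \<tau> = mat nn nn (\<lambda>(x, z). if vs ! z = \<tau> (vs ! x) then 1 else 0)"

lemma TT_carrier[simp]: "TT \<tau> \<in> carrier_mat nn nn" unfolding TT_def by simp
lemma TT_dims[simp]: "dim_row (TT \<tau>) = nn" "dim_col (TT \<tau>) = nn" unfolding TT_def by simp_all

lemma TT_mult_entry:
  assumes tc: "\<forall>x\<in>carrier G. \<tau> x \<in> carrier G"
    and B: "B \<in> carrier_mat nn m" and x: "x < nn" and q: "q < m"
  shows "(TT \<tau> * B) $$ (x, q) = B $$ (idx (\<tau> (vs ! x)), q)"
proof -
  have "(TT \<tau> * B) $$ (x, q) = (\<Sum>y<nn. TT \<tau> $$ (x, y) * B $$ (y, q))" by (rule mult_entry[OF TT_carrier B x q])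
  also have "\<dots> = (\<Sum>y<nn. (if vs ! y = \<tau> (vs ! x) then 1 else 0) * B $$ (y, q))"
    by (rule sum.cong) (use x in \<open>auto simp: TT_def\<close>)
  also have "\<dots> = B $$ (idx (\<tau> (vs ! x)), q)" by (rule sum_delta_idx) (use tc vs_in x in auto)
  finally show ?thesis .
qed

lemma TT_TT:
  assumes tc: "\<forall>x\<in>carrier G. \<tau> x \<in> carrier G" and ti: "\<forall>x\<in>carrier G. \<tau> (\<tau> x) = x"
  shows "TT \<tau> * TT \<tau> = 1\<^sub>m nn"
proof (rule eq_matI)
  fix x y assume "x < dim_row (1\<^sub>m nn :: complex mat)" "y < dim_col (1\<^sub>m nn :: complex mat)"
  then have x: "x < nn" and y: "y < nn" by auto
  have X: "\<tau> (vs ! x) \<in> carrier G" using tc vs_in[OF x] by auto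
  have "(TT \<tau> * TT \<tau>) $$ (x, y) = TT \<tau> $$ (idx (\<tau> (vs ! x)), y)" by (rule TT_mult_entry[OF tc TT_carrier x y])
  also have "\<dots> = (if vs ! y = vs ! x then 1 else 0)"
    using idx_prop[OF X] y ti vs_in[OF x] by (simp add: TT_def)
  also have "\<dots> = 1\<^sub>m nn $$ (x, y)" using x y vs_eq_iff by simp
  finally show "(TT \<tau> * TT \<tau>) $$ (x, y) = 1\<^sub>m nn $$ (x, y)" .
qed auto

lemma TT_RR:
  assumes tc: "\<forall>x\<in>carrier G. \<tau> x \<in> carrier G" and ti: "\<forall>x\<in>carrier G. \<tau> (\<tau> x) = x"
    and H1: "\<forall>x\<in>carrier G. \<forall>y\<in>carrier G. (inv x \<otimes> \<tau> y \<in> S \<longleftrightarrow> inv (\<tau> x) \<otimes> y \<in> S)"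
  shows "TT \<tau> * RR S = RR S * TT \<tau>"
proof (rule eq_matI)
  fix x y assume "x < dim_row (RR S * TT \<tau>)" "y < dim_col (RR S * TT \<tau>)"
  then have x: "x < nn" and y: "y < nn" by auto
  have X: "vs ! x \<in> carrier G" and Y: "vs ! y \<in> carrier G" using vs_in x y by auto
  have tX: "\<tau> (vs ! x) \<in> carrier G" and tY: "\<tau> (vs ! y) \<in> carrier G" using tc X Y by auto
  have "(TT \<tau> * RR S) $$ (x, y) = RR S $$ (idx (\<tau> (vs ! x)), y)" by (rule TT_mult_entry[OF tc RR_carrier x y])
  also have "\<dots> = (if inv (\<tau> (vs ! x)) \<otimes> vs ! y \<in> S then 1 else 0)"
    using idx_prop[OF tX] y by (simp add: RR_def)
  also have "\<dots> = (if inv (vs ! x) \<otimes> \<tau> (vs ! y) \<in> S then 1 else 0)" using H1[rule_format, OF X Y] by simp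
  also have "\<dots> = (\<Sum>z<nn. (if vs ! z = \<tau> (vs ! y) then 1 else 0) * (if inv (vs ! x) \<otimes> vs ! z \<in> S then 1 else 0))"
    by (rule sum_delta_idx[OF tY, symmetric, where H = "\<lambda>z. if inv (vs ! x) \<otimes> vs ! z \<in> S then 1 else 0", simplified idx_prop[OF tY]])
  also have "\<dots> = (\<Sum>z<nn. RR S $$ (x, z) * TT \<tau> $$ (z, y))"
  proof (rule sum.cong)
    fix z assume z: "z \<in> {..<nn}"
    have Z: "vs ! z \<in> carrier G" using vs_in z by auto
    have "vs ! z = \<tau> (vs ! y) \<longleftrightarrow> vs ! y = \<tau> (vs ! z)"
      using ti[rule_format, OF Y] ti[rule_format, OF Z] by auto
    then show "(if vs ! z = \<tau> (vs ! y) then 1 else 0) * (if inv (vs ! x) \<otimes> vs ! z \<in> S then 1 else 0) =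
      RR S $$ (x, z) * TT \<tau> $$ (z, y)" using x y z by (simp add: RR_def TT_def)
  qed simp
  also have "\<dots> = (RR S * TT \<tau>) $$ (x, y)" by (rule mult_entry[OF RR_carrier TT_carrier x y, symmetric])
  finally show "(TT \<tau> * RR S) $$ (x, y) = (RR S * TT \<tau>) $$ (x, y)" .
qed auto

lemma TT_trace:
  shows "mat_trace (TT \<tau>) = of_nat (card {g \<in> carrier G. \<tau> g = g})"
proof -
  have "mat_trace (TT \<tau>) = (\<Sum>x<nn. (\<lambda>g. if g = \<tau> g then 1 else 0) (vs ! x))"
    unfolding mat_trace_def by (rule sum.cong) (auto simp: TT_def)
  also have "\<dots> = (\<Sum>g\<in>carrier G. if g = \<tau> g then 1 else 0)" by (rule sum_vs)
  also have "\<dots> = (\<Sum>g\<in>{g \<in> carrier G. g = \<tau> g}. 1)"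
    using fin by (simp add: sum.inter_filter[symmetric])
  also have "{g \<in> carrier G. g = \<tau> g} = {g \<in> carrier G. \<tau> g = g}" by auto
  finally show ?thesis by simp
qed

end


lemma prod_mset_list: "(\<Prod>a\<in>#mset L. h a) = (\<Prod>a\<leftarrow>L. h a)"
  by (induction L) auto

context irrsys
begin

theorem spec_general:
  assumes S: "S \<subseteq> carrier G" and conj: "\<forall>g\<in>carrier G. \<forall>s\<in>S. g \<otimes> s \<otimes> inv g \<in> S"
    and tc: "\<forall>x\<in>carrier G. \<tau> x \<in> carrier G" and ti: "\<forall>x\<in>carrier G. \<tau> (\<tau> x) = x"
    and H1: "\<forall>x\<in>carrier G. \<forall>y\<in>carrier G. (inv x \<otimes> \<tau> y \<in> S \<longleftrightarrow> inv (\<tau> x) \<otimes> y \<in> S)"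
  shows "\<exists>c. spectrum_up_to_signs S reps (eigenvalue_mset (TT \<tau> * RR S)) c \<and>
            2 * c = nn + card {g \<in> carrier G. \<tau> g = g}"
proof -
  obtain base where base: "set base = II" "distinct base" using finite_distinct_list[OF finite_II] by auto
  define lv where "lv t = lam S (fst t)" for t :: "nat \<times> nat \<times> nat"
  obtain vals where vals: "distinct vals" "set vals = lv ` II"
    using finite_distinct_list[of "lv ` II"] finite_II by auto
  define key where "key t = (SOME j. j < length vals \<and> vals ! j = lv t)" for t
  have key: "key t < length vals \<and> vals ! key t = lv t" if "t \<in> II" for t
  proof -
    have "\<exists>j. j < length vals \<and> vals ! j = lv t" using that vals(2) by (metis imageI in_set_conv_nth)
    then show ?thesis unfolding key_def by (rule someI_ex)
  qed
  define ks where "ks = sort_key key base"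
  have ks: "distinct ks" "set ks = II" unfolding ks_def using base by auto
  have N: "length ks = nn" using ks_size[OF ks] by simp
  define kl where "kl = map key ks"
  have kl: "length kl = nn" "sorted kl" unfolding kl_def ks_def using N ks_def by auto
  have ksII: "ks ! k \<in> II" if "k < nn" for k using ks N that nth_mem by metis
  have lvk: "lv (ks ! k) = vals ! (kl ! k)" if "k < nn" for k
    using key[OF ksII[OF that]] that N unfolding kl_def by simp
  define M where "M = MM ks"
  define M' where "M' = MM' ks"
  define D where "D = DD S ks"
  define T where "T = TT \<tau>"
  define R where "R = RR S"
  have Mc: "M \<in> carrier_mat nn nn" unfolding M_def using MM_carrier N by metis
  have M'c: "M' \<in> carrier_mat nn nn" unfolding M'_def using MM'_carrier N by metis
  have Dc: "D \<in> carrier_mat nn nn" unfolding D_def using DD_carrier N by metis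
  have Tc: "T \<in> carrier_mat nn nn" unfolding T_def by simp
  have Rc: "R \<in> carrier_mat nn nn" unfolding R_def by simp
  have sqa: "\<And>A B C. A \<in> carrier_mat nn nn \<Longrightarrow> B \<in> carrier_mat nn nn \<Longrightarrow> C \<in> carrier_mat nn nn \<Longrightarrow>
    A * B * C = A * (B * C)" by (rule assoc_mult_mat)
  have sqc: "\<And>A B. A \<in> carrier_mat nn nn \<Longrightarrow> B \<in> carrier_mat nn nn \<Longrightarrow> A * B \<in> carrier_mat nn nn"
    by (rule mult_carrier_mat)
  have L1: "M' * M = 1\<^sub>m nn" unfolding M_def M'_def using MM'_MM[OF ks] N by simp
  have L2: "M * M' = 1\<^sub>m nn" unfolding M_def M'_def using ks_size[OF ks] by simp
  have L3: "T * T = 1\<^sub>m nn" unfolding T_def by (rule TT_TT[OF tc ti])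
  have L4: "T * R = R * T" unfolding T_def R_def by (rule TT_RR[OF tc ti H1])
  have L5: "R * M = M * D" unfolding R_def M_def D_def by (rule RR_MM[OF S conj ks])
  have L6: "M' * R = D * M'"
  proof -
    have "M' * R = M' * R * (M * M')" using L2 M'c Rc by simp
    also have "\<dots> = M' * (R * M) * M'" using M'c Rc Mc by (simp add: sqa sqc)
    also have "\<dots> = M' * (M * D) * M'" using L5 by simp
    also have "\<dots> = (M' * M) * D * M'" using M'c Mc Dc by (simp add: sqa sqc)
    also have "\<dots> = D * M'" using L1 Dc M'c by simp
    finally show ?thesis .
  qed
  have R1: "\<And>X. X \<in> carrier_mat nn nn \<Longrightarrow> M' * (M * X) = X" using L1 sqa Mc M'c by (metis left_mult_one_mat)
  have R2: "\<And>X. X \<in> carrier_mat nn nn \<Longrightarrow> M * (M' * X) = X" using L2 sqa Mc M'c by (metis left_mult_one_mat)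
  have R3: "\<And>X. X \<in> carrier_mat nn nn \<Longrightarrow> T * (T * X) = X" using L3 sqa Tc by (metis left_mult_one_mat)
  have R4: "\<And>X. X \<in> carrier_mat nn nn \<Longrightarrow> T * (R * X) = R * (T * X)" using L4 sqa Tc Rc by metis
  have R5: "\<And>X. X \<in> carrier_mat nn nn \<Longrightarrow> M * (D * X) = R * (M * X)" using L5 sqa Mc Dc Rc by metis
  have R6: "\<And>X. X \<in> carrier_mat nn nn \<Longrightarrow> M' * (R * X) = D * (M' * X)" using L6 sqa M'c Dc Rc by metis
  define T' where "T' = M' * T * M"
  have T'c: "T' \<in> carrier_mat nn nn" unfolding T'_def using M'c Tc Mc by simp
  have T'T': "T' * T' = 1\<^sub>m nn"
  proof -
    have "T' * T' = M' * (T * (M * (M' * (T * M))))" unfolding T'_def using M'c Tc Mc by (simp add: sqa sqc)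
    also have "\<dots> = M' * (T * (T * M))" using R2 sqc Tc Mc by simp
    also have "\<dots> = M' * M" using R3 Mc by simp
    finally show ?thesis using L1 by simp
  qed
  have T'D: "T' * D = D * T'"
  proof -
    have "T' * D = M' * (T * (M * D))" unfolding T'_def using M'c Tc Mc Dc by (simp add: sqa sqc)
    also have "\<dots> = M' * (T * (R * M))" using L5 by simp
    also have "\<dots> = M' * (R * (T * M))" using R4 Mc by simp
    also have "\<dots> = D * (M' * (T * M))" using R6 sqc Tc Mc by simp
    also have "\<dots> = D * T'" unfolding T'_def using M'c Tc Mc by (simp add: sqa sqc)
    finally show ?thesis .
  qed
  have Asim: "T * R = M * (T' * D) * M'"
  proof -
    have "M * (T' * D) * M' = M * (M' * (T * (M * (D * M'))))" unfolding T'_def using M'c Tc Mc Dc by (simp add: sqa sqc)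
    also have "\<dots> = T * (M * (D * M'))" using R2 sqc Tc Mc Dc M'c by simp
    also have "\<dots> = T * (R * (M * M'))" using R5 M'c by simp
    also have "\<dots> = T * R" using L2 Tc Rc by simp
    finally show ?thesis by simp
  qed
  have Dent: "D $$ (i, j) = (if i = j then vals ! (kl ! i) else 0)" if "i < nn" "j < nn" for i j
    using that lvk N unfolding D_def DD_def lv_def by simp
  have T'Dent: "(T' * D) $$ (i, j) = T' $$ (i, j) * vals ! (kl ! j)" if i: "i < nn" and j: "j < nn" for i j
  proof -
    have "(T' * D) $$ (i, j) = (\<Sum>l<nn. T' $$ (i, l) * D $$ (l, j))" by (rule mult_entry[OF T'c Dc i j])
    also have "\<dots> = (\<Sum>l<nn. if l = j then T' $$ (i, j) * vals ! (kl ! j) else 0)"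
      by (rule sum.cong) (use Dent j in auto)
    finally show ?thesis using j by simp
  qed
  have DT'ent: "(D * T') $$ (i, j) = vals ! (kl ! i) * T' $$ (i, j)" if i: "i < nn" and j: "j < nn" for i j
  proof -
    have "(D * T') $$ (i, j) = (\<Sum>l<nn. D $$ (i, l) * T' $$ (l, j))" by (rule mult_entry[OF Dc T'c i j])
    also have "\<dots> = (\<Sum>l<nn. if l = i then vals ! (kl ! i) * T' $$ (i, j) else 0)"
      by (rule sum.cong) (use Dent i in auto)
    finally show ?thesis using i by simp
  qed
  have blk: "\<forall>i<nn. \<forall>j<nn. kl ! i \<noteq> kl ! j \<longrightarrow> T' $$ (i, j) = 0"
  proof (intro allI impI)
    fix i j assume i: "i < nn" and j: "j < nn" and ne: "kl ! i \<noteq> kl ! j"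
    have ki: "kl ! i < length vals" using key[OF ksII[OF i]] i N unfolding kl_def by simp
    have kj: "kl ! j < length vals" using key[OF ksII[OF j]] j N unfolding kl_def by simp
    have vne: "vals ! (kl ! i) \<noteq> vals ! (kl ! j)" using nth_eq_iff_index_eq[OF vals(1) ki kj] ne by simp
    have e: "(T' * D) $$ (i, j) = (D * T') $$ (i, j)" using T'D by simp
    have "T' $$ (i, j) * vals ! (kl ! j) = vals ! (kl ! i) * T' $$ (i, j)"
      using e unfolding T'Dent[OF i j] DT'ent[OF i j] .
    then have "T' $$ (i, j) * (vals ! (kl ! j) - vals ! (kl ! i)) = 0" by (simp add: algebra_simps)
    then show "T' $$ (i, j) = 0" using vne by simp
  qed
  obtain es where es: "length es = nn" "set es \<subseteq> {1, -1}"
    "char_poly (mat nn nn (\<lambda>(i, j). T' $$ (i, j) * vals ! (kl ! j))) = (\<Prod>k<nn. [:- (es ! k * vals ! (kl ! k)), 1:])"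
    "2 * (\<Sum>k<nn. if es ! k = 1 then 1 else 0) = of_nat nn + mat_trace T'"
    using block_invol[OF T'c T'T' kl blk, of "\<lambda>j. vals ! j"] by blast
  have TDeq: "T' * D = mat nn nn (\<lambda>(i, j). T' $$ (i, j) * vals ! (kl ! j))"
    by (rule eq_matI) (use T'Dent T'c Dc in auto)
  have "similar_mat (T * R) (T' * D)"
    by (rule similar_matI[of _ _ M M' nn]) (use Tc Rc T'c Dc Mc M'c L1 L2 Asim in auto)
  then have "char_poly (T * R) = char_poly (T' * D)" by (rule char_poly_similar)
  also have "\<dots> = (\<Prod>k<nn. [:- (es ! k * lv (ks ! k)), 1:])" using es(3) TDeq lvk by simp
  also have "\<dots> = (\<Prod>a\<in>#mset (map (\<lambda>k. es ! k * lv (ks ! k)) [0..<nn]). [:- a, 1:])"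
    unfolding prod_mset_list prod_list_upt_conv by (rule refl)
  finally have eig: "eigenvalue_mset (T * R) = mset (map (\<lambda>k. es ! k * lv (ks ! k)) [0..<nn])"
    by (rule eig_mset_eq)
  define eps where "eps t = es ! (SOME k. k < nn \<and> ks ! k = t)" for t
  have epsk: "eps (ks ! k) = es ! k" if k: "k < nn" for k
  proof -
    have "(SOME k'. k' < nn \<and> ks ! k' = ks ! k) = k"
      by (rule some_equality) (use k N nth_eq_iff_index_eq[OF ks(1)] in auto)
    then show ?thesis unfolding eps_def by simp
  qed
  have trT': "mat_trace T' = of_nat (card {g \<in> carrier G. \<tau> g = g})"
  proof -
    have "mat_trace T' = mat_trace (M' * (T * M))" unfolding T'_def using M'c Tc Mc by (simp add: sqa sqc)
    also have "\<dots> = mat_trace ((T * M) * M')" by (rule trace_comm[OF M'c]) (use Tc Mc in simp)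
    also have "(T * M) * M' = T" using Tc Mc M'c L2 by (simp add: sqa sqc)
    finally show ?thesis using TT_trace unfolding T_def by simp
  qed
  define c where "c = card {t \<in> rep_index reps. eps t = 1}"
  have cc: "c = card {k \<in> {..<nn}. es ! k = 1}"
  proof -
    have "{t \<in> rep_index reps. eps t = 1} = (\<lambda>k. ks ! k) ` {k \<in> {..<nn}. es ! k = 1}"
    proof
      show "{t \<in> rep_index reps. eps t = 1} \<subseteq> (\<lambda>k. ks ! k) ` {k \<in> {..<nn}. es ! k = 1}"
      proof
        fix t assume t: "t \<in> {t \<in> rep_index reps. eps t = 1}"
        then have "t \<in> set ks" using ks unfolding II_def by auto
        then obtain k where k: "k < nn" "t = ks ! k" using N by (auto simp: in_set_conv_nth)
        then show "t \<in> (\<lambda>k. ks ! k) ` {k \<in> {..<nn}. es ! k = 1}" using t epsk by auto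
      qed
      show "(\<lambda>k. ks ! k) ` {k \<in> {..<nn}. es ! k = 1} \<subseteq> {t \<in> rep_index reps. eps t = 1}"
        using ksII epsk unfolding II_def by auto
    qed
    moreover have "inj_on (\<lambda>k. ks ! k) {k \<in> {..<nn}. es ! k = 1}"
      using nth_eq_iff_index_eq[OF ks(1)] N by (auto simp: inj_on_def)
    ultimately show ?thesis unfolding c_def by (simp add: card_image)
  qed
  have "(\<Sum>k<nn. if es ! k = 1 then 1 else 0) = (of_nat c :: complex)"
    unfolding cc by (simp add: sum.inter_filter[symmetric])
  then have "of_nat (2 * c) = (of_nat (nn + card {g \<in> carrier G. \<tau> g = g}) :: complex)"
    using es(4) trT' by simp
  then have c2: "2 * c = nn + card {g \<in> carrier G. \<tau> g = g}" using of_nat_eq_iff by blast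
  have spec: "spectrum_up_to_signs S reps (eigenvalue_mset (T * R)) c"
    unfolding spectrum_up_to_signs_def
  proof (intro exI[of _ eps] conjI)
    show "\<forall>k\<in>rep_index reps. eps k = 1 \<or> eps k = -1"
    proof
      fix t assume "t \<in> rep_index reps"
      then have "t \<in> set ks" using ks unfolding II_def by auto
      then obtain k where k: "k < nn" "t = ks ! k" using N by (auto simp: in_set_conv_nth)
      have "es ! k \<in> set es" using k es(1) by simp
      then show "eps t = 1 \<or> eps t = -1" using es(2) epsk k by auto
    qed
    show "card {k \<in> rep_index reps. eps k = 1} = c" unfolding c_def ..
    have f: "(\<lambda>(i, a, b). eps (i, a, b) * rep_lambda S (fst (reps ! i)) (snd (reps ! i))) = (\<lambda>t. eps t * lv t)"
      by (auto simp: lv_def lam_def dd_def rr_def)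
    have "image_mset (\<lambda>(i, a, b). eps (i, a, b) * rep_lambda S (fst (reps ! i)) (snd (reps ! i))) (mset_set (rep_index reps))
        = image_mset (\<lambda>t. eps t * lv t) (mset ks)"
      unfolding f using mset_set_set[OF ks(1)] ks(2) unfolding II_def by simp
    also have "\<dots> = mset (map (\<lambda>t. eps t * lv t) ks)" by simp
    also have "map (\<lambda>t. eps t * lv t) ks = map (\<lambda>k. es ! k * lv (ks ! k)) [0..<nn]"
    proof -
      have "map (\<lambda>t. eps t * lv t) ks = map (\<lambda>t. eps t * lv t) (map (\<lambda>k. ks ! k) [0..<nn])"
        using map_nth[of ks] N by simp
      also have "\<dots> = map (\<lambda>k. es ! k * lv (ks ! k)) [0..<nn]" using epsk by simp
      finally show ?thesis .
    qed
    finally have X: "image_mset (\<lambda>(i, a, b). eps (i, a, b) * rep_lambda S (fst (reps ! i)) (snd (reps ! i))) (mset_set (rep_index reps)) = mset (map (\<lambda>k. es ! k * lv (ks ! k)) [0..<nn])" .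
    show "eigenvalue_mset (T * R) = image_mset (\<lambda>(i, a, b). eps (i, a, b) * rep_lambda S (fst (reps ! i)) (snd (reps ! i))) (mset_set (rep_index reps))"
      by (simp only: eig X)
  qed
  show ?thesis using spec c2 unfolding T_def R_def by blast
qed

end


context irrsys
begin

lemma adj_eq:
  assumes tc: "\<forall>x\<in>carrier G. \<tau> x \<in> carrier G"
    and edge: "\<forall>X\<in>carrier G. \<forall>Y\<in>carrier G. \<exists>w. (\<forall>s\<in>S. e X s = Y \<longleftrightarrow> s = w) \<and> (w \<in> S \<longleftrightarrow> inv (\<tau> X) \<otimes> Y \<in> S)"
  shows "adj_matrix G S e = TT \<tau> * RR S"
proof (rule eq_matI)
  have adj: "adj_matrix G S e = mat nn nn (\<lambda>(i, j). of_nat (card {s \<in> S. e (vs ! i) s = vs ! j}))"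
    unfolding adj_matrix_def Let_def vs_def[symmetric] using vs_prop by simp
  show "dim_row (adj_matrix G S e) = dim_row (TT \<tau> * RR S)" "dim_col (adj_matrix G S e) = dim_col (TT \<tau> * RR S)"
    unfolding adj by simp_all
  fix x y assume "x < dim_row (TT \<tau> * RR S)" "y < dim_col (TT \<tau> * RR S)"
  then have x: "x < nn" and y: "y < nn" by auto
  have X: "vs ! x \<in> carrier G" and Y: "vs ! y \<in> carrier G" using vs_in x y by auto
  obtain w where w: "\<forall>s\<in>S. e (vs ! x) s = vs ! y \<longleftrightarrow> s = w" "w \<in> S \<longleftrightarrow> inv (\<tau> (vs ! x)) \<otimes> vs ! y \<in> S"
    using edge X Y by blast
  have "{s \<in> S. e (vs ! x) s = vs ! y} = (if w \<in> S then {w} else {})" using w(1) by auto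
  then have "adj_matrix G S e $$ (x, y) = (if inv (\<tau> (vs ! x)) \<otimes> vs ! y \<in> S then 1 else 0)"
    unfolding adj using x y w(2) by simp
  also have "\<dots> = RR S $$ (idx (\<tau> (vs ! x)), y)"
    using idx_prop[of "\<tau> (vs ! x)"] tc X y by (simp add: RR_def)
  also have "\<dots> = (TT \<tau> * RR S) $$ (x, y)" by (rule TT_mult_entry[OF tc RR_carrier x y, symmetric])
  finally show "adj_matrix G S e $$ (x, y) = (TT \<tau> * RR S) $$ (x, y)" .
qed

lemma swap_in_S:
  assumes conj: "\<forall>g\<in>carrier G. \<forall>s\<in>S. g \<otimes> s \<otimes> inv g \<in> S"
    and a: "a \<in> carrier G" and b: "b \<in> carrier G" and ab: "a \<otimes> b \<in> S"
  shows "b \<otimes> a \<in> S"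
proof -
  have "b \<otimes> (a \<otimes> b) \<otimes> inv b \<in> S" using conj b ab by blast
  moreover have "b \<otimes> (a \<otimes> b) \<otimes> inv b = b \<otimes> a" using a b by (simp add: m_assoc)
  ultimately show ?thesis by simp
qed

end

theorem theorem3p1:
  fixes G :: "('a, 'b) monoid_scheme" and \<sigma> :: "'a \<Rightarrow> 'a" and S :: "'a set"
    and reps :: "(nat \<times> ('a \<Rightarrow> complex mat)) list"
  assumes grp: "group G"
    and fin: "finite (carrier G)"
    and card4: "card (carrier G) \<ge> 4"
    and aut: "\<sigma> \<in> iso G G"
    and ord2: "\<forall>g\<in>carrier G. \<sigma> (\<sigma> g) = g" "\<exists>g\<in>carrier G. \<sigma> g \<noteq> g"
    and S_sub: "S \<subseteq> carrier G"
    and S_sym: "\<forall>s\<in>S. inv\<^bsub>G\<^esub> s \<in> S"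
    and S_conj: "\<forall>g\<in>carrier G. \<forall>s\<in>S. g \<otimes>\<^bsub>G\<^esub> s \<otimes>\<^bsub>G\<^esub> inv\<^bsub>G\<^esub> g \<in> S"
    and irr: "complete_irreps G reps"
  shows
    "(\<exists>c. spectrum_up_to_signs S reps (eigenvalue_mset (adj_matrix G S (cayley_sum_edge G))) c \<and>
          2 * c = card (carrier G) + card {g\<in>carrier G. g = inv\<^bsub>G\<^esub> g})
   \<and> (\<sigma> ` S = S \<longrightarrow>
        (\<exists>c. spectrum_up_to_signs S reps (eigenvalue_mset (adj_matrix G S (twisted_cayley_edge G \<sigma>))) c \<and>
          2 * c = card (carrier G) + card {g\<in>carrier G. g = \<sigma> g}))
   \<and> (\<sigma> ` S = S \<longrightarrow>
        (\<exists>c. spectrum_up_to_signs S reps (eigenvalue_mset (adj_matrix G S (twisted_cayley_sum_edge G \<sigma>))) c \<and>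
          2 * c = card (carrier G) + card {g\<in>carrier G. g = inv\<^bsub>G\<^esub> (\<sigma> g)}))"
proof -
  interpret I: irrsys G reps
    using grp fin irr by (simp add: irrsys_def fgrp_def fgrp_axioms_def irrsys_axioms_def)
  interpret H: group_hom G G \<sigma>
    using grp aut unfolding group_hom_def group_hom_axioms_def iso_def by auto
  have nn: "I.nn = card (carrier G)" unfolding I.nn_def ..
  have Sc: "\<And>s. s \<in> S \<Longrightarrow> s \<in> carrier G" using S_sub by auto
  have symS: "inv\<^bsub>G\<^esub> x \<in> S \<longleftrightarrow> x \<in> S" if x: "x \<in> carrier G" for x
    using S_sym x by (metis I.inv_inv)
  have swapS: "a \<otimes>\<^bsub>G\<^esub> b \<in> S \<longleftrightarrow> b \<otimes>\<^bsub>G\<^esub> a \<in> S" if "a \<in> carrier G" "b \<in> carrier G" for a b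
    using I.swap_in_S[OF S_conj] that by blast
  have c1: "\<exists>c. spectrum_up_to_signs S reps (eigenvalue_mset (adj_matrix G S (cayley_sum_edge G))) c \<and>
          2 * c = card (carrier G) + card {g\<in>carrier G. g = inv\<^bsub>G\<^esub> g}"
  proof -
    let ?\<tau> = "\<lambda>x. inv\<^bsub>G\<^esub> x"
    have tc: "\<forall>x\<in>carrier G. ?\<tau> x \<in> carrier G" by simp
    have ti: "\<forall>x\<in>carrier G. ?\<tau> (?\<tau> x) = x" by simp
    have H1: "\<forall>x\<in>carrier G. \<forall>y\<in>carrier G. (inv\<^bsub>G\<^esub> x \<otimes>\<^bsub>G\<^esub> ?\<tau> y \<in> S \<longleftrightarrow> inv\<^bsub>G\<^esub> (?\<tau> x) \<otimes>\<^bsub>G\<^esub> y \<in> S)"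
    proof (intro ballI)
      fix x y assume x: "x \<in> carrier G" and y: "y \<in> carrier G"
      have "inv\<^bsub>G\<^esub> x \<otimes>\<^bsub>G\<^esub> inv\<^bsub>G\<^esub> y = inv\<^bsub>G\<^esub> (y \<otimes>\<^bsub>G\<^esub> x)" using x y by (simp add: I.inv_mult_group)
      then have "inv\<^bsub>G\<^esub> x \<otimes>\<^bsub>G\<^esub> inv\<^bsub>G\<^esub> y \<in> S \<longleftrightarrow> y \<otimes>\<^bsub>G\<^esub> x \<in> S" using symS x y by simp
      also have "\<dots> \<longleftrightarrow> x \<otimes>\<^bsub>G\<^esub> y \<in> S" using swapS x y by blast
      finally show "inv\<^bsub>G\<^esub> x \<otimes>\<^bsub>G\<^esub> ?\<tau> y \<in> S \<longleftrightarrow> inv\<^bsub>G\<^esub> (?\<tau> x) \<otimes>\<^bsub>G\<^esub> y \<in> S" using x by simp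
    qed
    have edge: "\<forall>X\<in>carrier G. \<forall>Y\<in>carrier G. \<exists>w. (\<forall>s\<in>S. cayley_sum_edge G X s = Y \<longleftrightarrow> s = w) \<and> (w \<in> S \<longleftrightarrow> inv\<^bsub>G\<^esub> (?\<tau> X) \<otimes>\<^bsub>G\<^esub> Y \<in> S)"
    proof (intro ballI)
      fix X Y assume X: "X \<in> carrier G" and Y: "Y \<in> carrier G"
      have A: "\<forall>s\<in>S. cayley_sum_edge G X s = Y \<longleftrightarrow> s = X \<otimes>\<^bsub>G\<^esub> Y"
      proof
        fix s assume "s \<in> S"
        then have s: "s \<in> carrier G" using Sc by simp
        show "cayley_sum_edge G X s = Y \<longleftrightarrow> s = X \<otimes>\<^bsub>G\<^esub> Y"
          unfolding cayley_sum_edge_def using X Y s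
          by (metis I.cancel_l_inv I.inv_cancel_l I.inv_closed I.inv_inv I.m_closed)
      qed
      have B: "X \<otimes>\<^bsub>G\<^esub> Y \<in> S \<longleftrightarrow> inv\<^bsub>G\<^esub> (?\<tau> X) \<otimes>\<^bsub>G\<^esub> Y \<in> S" using X by simp
      show "\<exists>w. (\<forall>s\<in>S. cayley_sum_edge G X s = Y \<longleftrightarrow> s = w) \<and> (w \<in> S \<longleftrightarrow> inv\<^bsub>G\<^esub> (?\<tau> X) \<otimes>\<^bsub>G\<^esub> Y \<in> S)"
        using A B by blast
    qed
    have "adj_matrix G S (cayley_sum_edge G) = I.TT ?\<tau> * I.RR S" by (rule I.adj_eq[OF tc edge])
    moreover have "{g \<in> carrier G. ?\<tau> g = g} = {g\<in>carrier G. g = inv\<^bsub>G\<^esub> g}" by auto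
    ultimately show ?thesis using I.spec_general[OF S_sub S_conj tc ti H1] nn by simp
  qed
  have sigS: "\<sigma> x \<in> S \<longleftrightarrow> x \<in> S" if eq: "\<sigma> ` S = S" and x: "x \<in> carrier G" for x
  proof
    assume "x \<in> S" then show "\<sigma> x \<in> S" using eq by auto
  next
    assume "\<sigma> x \<in> S"
    then have "\<sigma> (\<sigma> x) \<in> S" using eq by auto
    then show "x \<in> S" using ord2(1) x by simp
  qed
  have c2: "\<sigma> ` S = S \<longrightarrow>
        (\<exists>c. spectrum_up_to_signs S reps (eigenvalue_mset (adj_matrix G S (twisted_cayley_edge G \<sigma>))) c \<and>
          2 * c = card (carrier G) + card {g\<in>carrier G. g = \<sigma> g})"
  proof
    assume eq: "\<sigma> ` S = S"
    have tc: "\<forall>x\<in>carrier G. \<sigma> x \<in> carrier G" by simp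
    have ti: "\<forall>x\<in>carrier G. \<sigma> (\<sigma> x) = x" by (rule ord2(1))
    have H1: "\<forall>x\<in>carrier G. \<forall>y\<in>carrier G. (inv\<^bsub>G\<^esub> x \<otimes>\<^bsub>G\<^esub> \<sigma> y \<in> S \<longleftrightarrow> inv\<^bsub>G\<^esub> (\<sigma> x) \<otimes>\<^bsub>G\<^esub> y \<in> S)"
    proof (intro ballI)
      fix x y assume x: "x \<in> carrier G" and y: "y \<in> carrier G"
      have "\<sigma> (inv\<^bsub>G\<^esub> x \<otimes>\<^bsub>G\<^esub> \<sigma> y) = inv\<^bsub>G\<^esub> (\<sigma> x) \<otimes>\<^bsub>G\<^esub> y" using x y ord2(1) by simp
      then show "inv\<^bsub>G\<^esub> x \<otimes>\<^bsub>G\<^esub> \<sigma> y \<in> S \<longleftrightarrow> inv\<^bsub>G\<^esub> (\<sigma> x) \<otimes>\<^bsub>G\<^esub> y \<in> S"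
        using sigS[OF eq, of "inv\<^bsub>G\<^esub> x \<otimes>\<^bsub>G\<^esub> \<sigma> y"] x y by simp
    qed
    have edge: "\<forall>X\<in>carrier G. \<forall>Y\<in>carrier G. \<exists>w. (\<forall>s\<in>S. twisted_cayley_edge G \<sigma> X s = Y \<longleftrightarrow> s = w) \<and> (w \<in> S \<longleftrightarrow> inv\<^bsub>G\<^esub> (\<sigma> X) \<otimes>\<^bsub>G\<^esub> Y \<in> S)"
    proof (intro ballI)
      fix X Y assume X: "X \<in> carrier G" and Y: "Y \<in> carrier G"
      have A: "\<forall>s\<in>S. twisted_cayley_edge G \<sigma> X s = Y \<longleftrightarrow> s = inv\<^bsub>G\<^esub> X \<otimes>\<^bsub>G\<^esub> \<sigma> Y"
      proof
        fix s assume "s \<in> S"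
        then have s: "s \<in> carrier G" using Sc by simp
        have "\<sigma> (X \<otimes>\<^bsub>G\<^esub> s) = Y \<longleftrightarrow> X \<otimes>\<^bsub>G\<^esub> s = \<sigma> Y" using ord2(1) X Y s by (metis I.m_closed)
        also have "\<dots> \<longleftrightarrow> s = inv\<^bsub>G\<^esub> X \<otimes>\<^bsub>G\<^esub> \<sigma> Y" using X Y s
          by (metis I.cancel_l_inv I.inv_cancel_l H.hom_closed I.m_closed)
        finally show "twisted_cayley_edge G \<sigma> X s = Y \<longleftrightarrow> s = inv\<^bsub>G\<^esub> X \<otimes>\<^bsub>G\<^esub> \<sigma> Y"
          unfolding twisted_cayley_edge_def .
      qed
      have "\<sigma> (inv\<^bsub>G\<^esub> X \<otimes>\<^bsub>G\<^esub> \<sigma> Y) = inv\<^bsub>G\<^esub> (\<sigma> X) \<otimes>\<^bsub>G\<^esub> Y" using X Y ord2(1) by simp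
      then have B: "inv\<^bsub>G\<^esub> X \<otimes>\<^bsub>G\<^esub> \<sigma> Y \<in> S \<longleftrightarrow> inv\<^bsub>G\<^esub> (\<sigma> X) \<otimes>\<^bsub>G\<^esub> Y \<in> S"
        using sigS[OF eq, of "inv\<^bsub>G\<^esub> X \<otimes>\<^bsub>G\<^esub> \<sigma> Y"] X Y by simp
      show "\<exists>w. (\<forall>s\<in>S. twisted_cayley_edge G \<sigma> X s = Y \<longleftrightarrow> s = w) \<and> (w \<in> S \<longleftrightarrow> inv\<^bsub>G\<^esub> (\<sigma> X) \<otimes>\<^bsub>G\<^esub> Y \<in> S)"
        using A B by blast
    qed
    have "adj_matrix G S (twisted_cayley_edge G \<sigma>) = I.TT \<sigma> * I.RR S" by (rule I.adj_eq[OF tc edge])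
    moreover have "{g \<in> carrier G. \<sigma> g = g} = {g\<in>carrier G. g = \<sigma> g}" by auto
    ultimately show "\<exists>c. spectrum_up_to_signs S reps (eigenvalue_mset (adj_matrix G S (twisted_cayley_edge G \<sigma>))) c \<and>
          2 * c = card (carrier G) + card {g\<in>carrier G. g = \<sigma> g}"
      using I.spec_general[OF S_sub S_conj tc ti H1] nn by simp
  qed
  have c3: "\<sigma> ` S = S \<longrightarrow>
        (\<exists>c. spectrum_up_to_signs S reps (eigenvalue_mset (adj_matrix G S (twisted_cayley_sum_edge G \<sigma>))) c \<and>
          2 * c = card (carrier G) + card {g\<in>carrier G. g = inv\<^bsub>G\<^esub> (\<sigma> g)})"
  proof
    assume eq: "\<sigma> ` S = S"
    let ?\<tau> = "\<lambda>x. inv\<^bsub>G\<^esub> (\<sigma> x)"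
    have tc: "\<forall>x\<in>carrier G. ?\<tau> x \<in> carrier G" by simp
    have ti: "\<forall>x\<in>carrier G. ?\<tau> (?\<tau> x) = x" using ord2(1) by simp
    have H1: "\<forall>x\<in>carrier G. \<forall>y\<in>carrier G. (inv\<^bsub>G\<^esub> x \<otimes>\<^bsub>G\<^esub> ?\<tau> y \<in> S \<longleftrightarrow> inv\<^bsub>G\<^esub> (?\<tau> x) \<otimes>\<^bsub>G\<^esub> y \<in> S)"
    proof (intro ballI)
      fix x y assume x: "x \<in> carrier G" and y: "y \<in> carrier G"
      have "inv\<^bsub>G\<^esub> x \<otimes>\<^bsub>G\<^esub> inv\<^bsub>G\<^esub> (\<sigma> y) = inv\<^bsub>G\<^esub> (\<sigma> y \<otimes>\<^bsub>G\<^esub> x)" using x y by (simp add: I.inv_mult_group)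
      then have "inv\<^bsub>G\<^esub> x \<otimes>\<^bsub>G\<^esub> ?\<tau> y \<in> S \<longleftrightarrow> \<sigma> y \<otimes>\<^bsub>G\<^esub> x \<in> S" using symS x y by simp
      also have "\<dots> \<longleftrightarrow> \<sigma> (\<sigma> y \<otimes>\<^bsub>G\<^esub> x) \<in> S" using sigS[OF eq, of "\<sigma> y \<otimes>\<^bsub>G\<^esub> x"] x y by simp
      also have "\<sigma> (\<sigma> y \<otimes>\<^bsub>G\<^esub> x) = y \<otimes>\<^bsub>G\<^esub> \<sigma> x" using x y ord2(1) by simp
      also have "y \<otimes>\<^bsub>G\<^esub> \<sigma> x \<in> S \<longleftrightarrow> \<sigma> x \<otimes>\<^bsub>G\<^esub> y \<in> S" using swapS x y by simp
      finally show "inv\<^bsub>G\<^esub> x \<otimes>\<^bsub>G\<^esub> ?\<tau> y \<in> S \<longleftrightarrow> inv\<^bsub>G\<^esub> (?\<tau> x) \<otimes>\<^bsub>G\<^esub> y \<in> S" using x by simp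
    qed
    have edge: "\<forall>X\<in>carrier G. \<forall>Y\<in>carrier G. \<exists>w. (\<forall>s\<in>S. twisted_cayley_sum_edge G \<sigma> X s = Y \<longleftrightarrow> s = w) \<and> (w \<in> S \<longleftrightarrow> inv\<^bsub>G\<^esub> (?\<tau> X) \<otimes>\<^bsub>G\<^esub> Y \<in> S)"
    proof (intro ballI)
      fix X Y assume X: "X \<in> carrier G" and Y: "Y \<in> carrier G"
      have A: "\<forall>s\<in>S. twisted_cayley_sum_edge G \<sigma> X s = Y \<longleftrightarrow> s = X \<otimes>\<^bsub>G\<^esub> \<sigma> Y"
      proof
        fix s assume "s \<in> S"
        then have s: "s \<in> carrier G" using Sc by simp
        have "\<sigma> (inv\<^bsub>G\<^esub> X \<otimes>\<^bsub>G\<^esub> s) = Y \<longleftrightarrow> inv\<^bsub>G\<^esub> X \<otimes>\<^bsub>G\<^esub> s = \<sigma> Y"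
          using ord2(1) X Y s by (metis I.m_closed I.inv_closed)
        also have "\<dots> \<longleftrightarrow> s = X \<otimes>\<^bsub>G\<^esub> \<sigma> Y" using X Y s
          by (metis I.cancel_l_inv I.inv_cancel_l H.hom_closed I.m_closed I.inv_closed I.inv_inv)
        finally show "twisted_cayley_sum_edge G \<sigma> X s = Y \<longleftrightarrow> s = X \<otimes>\<^bsub>G\<^esub> \<sigma> Y"
          unfolding twisted_cayley_sum_edge_def .
      qed
      have "\<sigma> (X \<otimes>\<^bsub>G\<^esub> \<sigma> Y) = \<sigma> X \<otimes>\<^bsub>G\<^esub> Y" using X Y ord2(1) by simp
      then have B: "X \<otimes>\<^bsub>G\<^esub> \<sigma> Y \<in> S \<longleftrightarrow> inv\<^bsub>G\<^esub> (?\<tau> X) \<otimes>\<^bsub>G\<^esub> Y \<in> S"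
        using sigS[OF eq, of "X \<otimes>\<^bsub>G\<^esub> \<sigma> Y"] X Y by simp
      show "\<exists>w. (\<forall>s\<in>S. twisted_cayley_sum_edge G \<sigma> X s = Y \<longleftrightarrow> s = w) \<and> (w \<in> S \<longleftrightarrow> inv\<^bsub>G\<^esub> (?\<tau> X) \<otimes>\<^bsub>G\<^esub> Y \<in> S)"
        using A B by blast
    qed
    have "adj_matrix G S (twisted_cayley_sum_edge G \<sigma>) = I.TT ?\<tau> * I.RR S" by (rule I.adj_eq[OF tc edge])
    moreover have "{g \<in> carrier G. ?\<tau> g = g} = {g\<in>carrier G. g = inv\<^bsub>G\<^esub> (\<sigma> g)}" by auto
    ultimately show "\<exists>c. spectrum_up_to_signs S reps (eigenvalue_mset (adj_matrix G S (twisted_cayley_sum_edge G \<sigma>))) c \<and>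
          2 * c = card (carrier G) + card {g\<in>carrier G. g = inv\<^bsub>G\<^esub> (\<sigma> g)}"
      using I.spec_general[OF S_sub S_conj tc ti H1] nn by simp
  qed
  show ?thesis using c1 c2 c3 by blast
qed


end
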